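(* For every integer $n\ge2$: (1) $(n+1)\,\mathrm C_n(x,y)=(y+1)(2n-1)\,\mathrm C_{n-1}(x,y)+\bigl(4x-(y+1)^2\bigr)(n-2)\,\mathrm C_{n-2}(x,y)$; (2) $n\,\mathrm C^{\mathrm B}_n(x,y)=(y+1)(2n-1)\,\mathrm C^{\mathrm B}_{n-1}(x,y)+\bigl(4x-(y+1)^2\bigr)(n-1)\,\mathrm C^{\mathrm B}_{n-2}(x,y)$.
   Context: A set partition of a finite set $\mathcal X\subset\mathbb Z$ is a set of nonempty pairwise disjoint sets (blocks) with union $\mathcal X$. A pair $(i,j)$ is an arc of $\Lambda$ if $i<j$ lie in the same block and $j$ is the least element of that block greater than $i$; $\mathrm{Arc}(\Lambda)$ is the set of arcs, $\mathrm{Cov}(\Lambda)=\{(i,j)\in\mathrm{Arc}(\Lambda):j=i+1\}$. $\Lambda$ is noncrossing if there are no arcs $(i,k),(j,l)$ with $i<j<k<l$. $\mathrm{NC}(n)$ is the set of noncrossing partitions of $[n]=\{1,\dots,n\}$ and $\mathrm C_n(x,y)=\sum_{\Lambda\in\mathrm{NC}(n)}x^{|\mathrm{Arc}(\Lambda)\setminus\mathrm{Cov}(\Lambda)|}y^{|\mathrm{Cov}(\Lambda)|}$. With $[\pm n]=\{\pm1,\dots,\pm n\}$, $\Pi^{\mathrm B}(n)$ is the set of partitions $\Lambda$ of $\{0\}\cup[\pm n]$ with $(i,j)\in\mathrm{Arc}(\Lambda)$ iff $(-j,-i)\in\mathrm{Arc}(\Lambda)$, $\widetilde{\mathrm{NC}}^{\mathrm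 B}(n)$ is the set of $\Lambda\in\Pi^{\mathrm B}(n)$ such that whenever $(i,k),(j,l)\in\mathrm{Arc}(\Lambda)$ with $i<j<k<l$ we have $(i,k)=(-l,-j)$, and $\mathrm C^{\mathrm B}_n(x,y)=\sum_{\Lambda\in\widetilde{\mathrm{NC}}^{\mathrm B}(n)}x^{|\mathrm{Arc}(\Lambda)\setminus\mathrm{Cov}(\Lambda)|/2}y^{|\mathrm{Cov}(\Lambda)|/2}$. *)

theory Defs
  imports Main "HOL-Library.Disjoint_Sets"
begin

definition Arc :: "int set set \<Rightarrow> (int \<times> int) set" where
  "Arc P = {(i, j). \<exists>B\<in>P. i \<in> B \<and> j \<in> B \<and> i < j \<and> (\<forall>k\<in>B. i < k \<longrightarrow> j \<le> k)}"

definition Cov :: "int set set \<Rightarrow> (int \<times> int) set" where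
  "Cov P = {(i, j) \<in> Arc P. j = i + 1}"

definition noncrossing :: "int set set \<Rightarrow> bool" where
  "noncrossing P \<longleftrightarrow>
     \<not> (\<exists>i j k l. (i, k) \<in> Arc P \<and> (j, l) \<in> Arc P \<and> i < j \<and> j < k \<and> k < l)"

definition NC :: "nat \<Rightarrow> int set set set" where
  "NC n = {P. partition_on {1..int n} P \<and> noncrossing P}"

definition Cat :: "nat \<Rightarrow> 'a::comm_ring_1 \<Rightarrow> 'a \<Rightarrow> 'a" where
  "Cat n x y = (\<Sum>P\<in>NC n. x ^ card (Arc P - Cov P) * y ^ card (Cov P))"

text \<open>Type B partitions of {0} \<union> [\<plusminus>n] = {-n..n}: arc-symmetric, and (standard convention)
  the only block equal to its negative is the zero block.\<close>
definition PiB :: "nat \<Rightarrow> int set set set" where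
  "PiB n = {P. partition_on {- int n..int n} P
              \<and> (\<forall>i j. (i, j) \<in> Arc P \<longleftrightarrow> (- j, - i) \<in> Arc P)
              \<and> (\<forall>B\<in>P. uminus ` B = B \<longrightarrow> 0 \<in> B)}"

definition NCB_tilde :: "nat \<Rightarrow> int set set set" where
  "NCB_tilde n = {P \<in> PiB n. \<forall>i j k l. (i, k) \<in> Arc P \<and> (j, l) \<in> Arc P \<and> i < j \<and> j < k \<and> k < l
                      \<longrightarrow> (i, k) = (- l, - j)}"

definition CatB :: "nat \<Rightarrow> 'a::comm_ring_1 \<Rightarrow> 'a \<Rightarrow> 'a" where
  "CatB n x y = (\<Sum>P\<in>NCB_tilde n. x ^ (card (Arc P - Cov P) div 2) * y ^ (card (Cov P) div 2))"

end

theory Submission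
  imports Defs "HOL-Computational_Algebra.Formal_Power_Series"
begin


lemma idA:
  fixes a b X D Dp :: "'a::comm_ring_1"
  shows "(1 - 2*b*X + (b^2-4*a)*X^2)*(D + X*Dp) - (-b + (b^2-4*a)*X)*X*D - 2*X
   = (2*a*X*D+b*X-1)*(X*(a*D^2+2*a*X*D*Dp+b*D+b*X*Dp-Dp+1) + (a*X*D^2+b*X*D-D+X))
     - 2*X*(a*X*D^2+b*X*D-D+X)*(2*a*D+2*a*X*Dp+b)"
  by (simp add: algebra_simps power2_eq_square power3_eq_cube)

lemma idB:
  fixes a b X D Dp B Bp :: "'a::comm_ring_1"
  shows "(1 - 2*b*X + (b^2-4*a)*X^2)*Bp + (-b + (b^2-4*a)*X)*B
   = (2*a*X*D+b*X-1)*(Bp*(2*a*X*D+b*X-1) + B*(2*a*D+2*a*X*Dp+b))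
     - 4*a*X*(a*X*D^2+b*X*D-D+X)*Bp
     - 2*a*B*(X*(a*D^2+2*a*X*D*Dp+b*D+b*X*Dp-Dp+1) + (a*X*D^2+b*X*D-D+X))"
  by (simp add: algebra_simps power2_eq_square power3_eq_cube)


unbundle fps_syntax

lemma nth_cXk:
  fixes f :: "'a::comm_ring_1 fps"
  shows "(fps_const c * (fps_X^k * f)) $ n = (if n < k then 0 else c * f $ (n-k))"
  by (simp add: fps_X_power_mult_nth)

lemma algA:
  fixes c :: "nat \<Rightarrow> 'a::comm_ring_1" and x y :: 'a
  assumes c1: "c 1 = 1"
    and rec: "\<And>n. n \<ge> 2 \<Longrightarrow> c n = (1+y) * c (n-1) + x * (\<Sum>i=1..n-2. c i * c (n-1-i))"
    and n: "n \<ge> 2"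
  shows "of_nat (n+1) * c n = (y+1) * of_nat (2*n-1) * c (n-1)
           + (4*x - (y+1)^2) * of_nat (n-2) * c (n-2)"
proof -
  define d where "d k = (if k = 0 then 0 else c k)" for k
  define D where "D = Abs_fps d"
  define a where "a = fps_const x"
  define b where "b = fps_const (1+y)"
  define X where "X = (fps_X :: 'a fps)"
  define Q where "Q = a*X*D^2+b*X*D-D+X"
  have Dn: "D $ k = d k" for k by (simp add: D_def)
  have Q0: "Q = 0"
  proof (rule fps_ext)
    fix m
    have sq: "(D^2) $ k = (\<Sum>i=0..k. d i * d (k-i))" for k
      by (simp add: power2_eq_square fps_mult_nth Dn)
    have "Q $ m = (if m = 0 then 0 else x * (D^2) $ (m-1) + (1+y) * d (m-1) - d m + (if m = 1 then 1 else 0))"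
      by (simp add: Q_def a_def b_def X_def Dn mult.assoc fps_X_mult_nth d_def)
    also have "\<dots> = 0"
    proof (cases "m \<ge> 2")
      case True
      have "(\<Sum>i=0..m-1. d i * d (m-1-i)) = (\<Sum>i=1..m-2. c i * c (m-1-i))"
        using True by (intro sum.mono_neutral_cong_right) (auto simp: d_def)
      then show ?thesis using True rec[OF True] by (simp add: sq d_def)
    next
      case False
      then have "m = 0 \<or> m = 1" by auto
      then show ?thesis using c1 by (auto simp: d_def sq)
    qed
    finally show "Q $ m = 0 $ m" by simp
  qed
  define Dp where "Dp = fps_deriv D"
  have dQ: "fps_deriv Q = a*D^2+2*a*X*D*Dp+b*D+b*X*Dp-Dp+1"
    by (simp add: Q_def a_def b_def X_def Dp_def power2_eq_square algebra_simps)
  have L0: "(1 - 2*b*X + (b^2-4*a)*X^2)*(D + X*Dp) - (-b + (b^2-4*a)*X)*X*D - 2*X = 0"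
    using idA[of b X a D Dp] dQ Q0 unfolding Q_def by simp
  have e1: "(1 - 2*b*X + (b^2-4*a)*X^2)*(D + X*Dp) - (-b + (b^2-4*a)*X)*X*D - 2*X
     = D + X*Dp - b*(X*D) - (2*b)*(X^2*Dp) + (b^2-4*a)*(X^3*Dp) - 2*X"
    by (simp add: algebra_simps power2_eq_square power3_eq_cube)
  have e2: "2*b = fps_const (2*(1+y))" "b^2-4*a = fps_const ((1+y)^2-4*x)" "(2::'a fps) = fps_const 2"
    by (simp_all add: a_def b_def numeral_fps_const fps_const_power)
  define k where "k = n - 2"
  have nk: "n = Suc (Suc k)" using n by (simp add: k_def)
  have "0 = ((1 - 2*b*X + (b^2-4*a)*X^2)*(D + X*Dp) - (-b + (b^2-4*a)*X)*X*D - 2*X) $ n"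
    using L0 by simp
  also have "\<dots> = d (k+2) + of_nat (k+2) * d (k+2) - (1+y) * d (k+1) - 2*(1+y) * (of_nat (k+1) * d (k+1))
       + ((1+y)^2-4*x) * (of_nat k * d k)"
    unfolding e1 unfolding e2(1) e2(2) nk
    by (cases k) (simp_all add: fps_X_power_mult_nth X_def Dp_def Dn e2(3) b_def d_def)
  also have "\<dots> = c (k+2) + of_nat (k+2) * c (k+2) - (1+y) * c (k+1) - 2*(1+y) * (of_nat (k+1) * c (k+1))
       + ((1+y)^2-4*x) * (of_nat k * c k)"
    by (cases "k = 0") (auto simp: d_def)
  finally have "0 = c (k+2) + of_nat (k+2) * c (k+2) - (1+y) * c (k+1) - 2*(1+y) * (of_nat (k+1) * c (k+1))
       + ((1+y)^2-4*x) * (of_nat k * c k)" .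
  then show ?thesis unfolding nk
    by (simp add: algebra_simps of_nat_Suc)  
qed

lemma algB:
  fixes c cb :: "nat \<Rightarrow> 'a::comm_ring_1" and x y :: 'a
  assumes c1: "c 1 = 1"
    and rec: "\<And>n. n \<ge> 2 \<Longrightarrow> c n = (1+y) * c (n-1) + x * (\<Sum>i=1..n-2. c i * c (n-1-i))"
    and cb0: "cb 0 = 1"
    and recB: "\<And>n. n \<ge> 1 \<Longrightarrow> cb n = (1+y) * cb (n-1) + 2 * x * (\<Sum>i<n-1. cb i * c (n-1-i))"
    and n: "n \<ge> 2"
  shows "of_nat n * cb n = (y+1) * of_nat (2*n-1) * cb (n-1)
           + (4*x - (y+1)^2) * of_nat (n-1) * cb (n-2)"
proof -
  define d where "d k = (if k = 0 then 0 else c k)" for k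
  define D where "D = Abs_fps d"
  define B where "B = Abs_fps cb"
  define a where "a = fps_const x"
  define b where "b = fps_const (1+y)"
  define X where "X = (fps_X :: 'a fps)"
  define Q where "Q = a*X*D^2+b*X*D-D+X"
  have Dn: "D $ k = d k" for k by (simp add: D_def)
  have Bn: "B $ k = cb k" for k by (simp add: B_def)
  have Q0: "Q = 0"
  proof (rule fps_ext)
    fix m
    have sq: "(D^2) $ k = (\<Sum>i=0..k. d i * d (k-i))" for k
      by (simp add: power2_eq_square fps_mult_nth Dn)
    have "Q $ m = (if m = 0 then 0 else x * (D^2) $ (m-1) + (1+y) * d (m-1) - d m + (if m = 1 then 1 else 0))"
      by (simp add: Q_def a_def b_def X_def Dn mult.assoc fps_X_mult_nth d_def)
    also have "\<dots> = 0"
    proof (cases "m \<ge> 2")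
      case True
      have "(\<Sum>i=0..m-1. d i * d (m-1-i)) = (\<Sum>i=1..m-2. c i * c (m-1-i))"
        using True by (intro sum.mono_neutral_cong_right) (auto simp: d_def)
      then show ?thesis using True rec[OF True] by (simp add: sq d_def)
    next
      case False
      then have "m = 0 \<or> m = 1" by auto
      then show ?thesis using c1 by (auto simp: d_def sq)
    qed
    finally show "Q $ m = 0 $ m" by simp
  qed
  define S where "S = 2*a*X*D+b*X-1"
  define P where "P = B*S + 1"
  have P0: "P = 0"
  proof (rule fps_ext)
    fix m
    have "P $ m = 2 * x * (B*D) $ (m-1) * (if m = 0 then 0 else 1) + (if m = 0 then 0 else (1+y) * cb (m-1)) - cb m
        + (if m = 0 then 1 else 0)"
    proof -
      have "P = fps_const (2*x) * (fps_X * (B*D)) + fps_const (1+y) * (fps_X * B) - B + 1"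
        by (simp add: P_def S_def a_def b_def X_def algebra_simps numeral_fps_const)
      then show ?thesis by (simp add: Bn)
    qed
    also have "\<dots> = 0"
    proof (cases "m \<ge> 1")
      case True
      have "(B*D) $ (m-1) = (\<Sum>i<m-1. cb i * c (m-1-i))"
        unfolding fps_mult_nth Bn Dn
        using True by (intro sum.mono_neutral_cong_right) (auto simp: d_def)
      then show ?thesis using True recB[OF True] by (simp add: algebra_simps)
    next
      case False
      then have "m = 0" by simp
      then show ?thesis using cb0 by simp
    qed
    finally show "P $ m = 0 $ m" by simp
  qed
  define Dp where "Dp = fps_deriv D"
  define Bp where "Bp = fps_deriv B"
  have dQ: "fps_deriv Q = a*D^2+2*a*X*D*Dp+b*D+b*X*Dp-Dp+1"
    by (simp add: Q_def a_def b_def X_def Dp_def power2_eq_square algebra_simps)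
  have dP: "fps_deriv P = Bp*(2*a*X*D+b*X-1) + B*(2*a*D+2*a*X*Dp+b)"
    by (simp add: P_def S_def a_def b_def X_def Dp_def Bp_def algebra_simps)
  have L0: "(1 - 2*b*X + (b^2-4*a)*X^2)*Bp + (-b + (b^2-4*a)*X)*B = 0"
    using idB[of b X a Bp B D Dp] dQ Q0 dP P0 unfolding Q_def P_def S_def by simp
  have e1: "(1 - 2*b*X + (b^2-4*a)*X^2)*Bp + (-b + (b^2-4*a)*X)*B
     = Bp - (2*b)*(X^1*Bp) + (b^2-4*a)*(X^2*Bp) - b * B + (b^2-4*a)*(X^1*B)"
    by (simp add: algebra_simps power2_eq_square)
  have e2: "2*b = fps_const (2*(1+y))" "b^2-4*a = fps_const ((1+y)^2-4*x)"
    by (simp_all add: a_def b_def numeral_fps_const fps_const_power)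
  define k where "k = n - 2"
  have nk: "n = Suc (Suc k)" using n by (simp add: k_def)
  have "0 = ((1 - 2*b*X + (b^2-4*a)*X^2)*Bp + (-b + (b^2-4*a)*X)*B) $ (Suc k)"
    using L0 by simp
  also have "\<dots> = of_nat (k+2) * cb (k+2) - 2*(1+y) * (of_nat (k+1) * cb (k+1))
       + ((1+y)^2-4*x) * (of_nat k * cb k) - (1+y) * cb (k+1) + ((1+y)^2-4*x) * cb k"
    unfolding e1 unfolding e2(1) e2(2)
    by (cases k) (simp_all add: fps_X_power_mult_nth X_def Bp_def Bn b_def)
  finally have "0 = of_nat (k+2) * cb (k+2) - 2*(1+y) * (of_nat (k+1) * cb (k+1))
       + ((1+y)^2-4*x) * (of_nat k * cb k) - (1+y) * cb (k+1) + ((1+y)^2-4*x) * cb k" .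
  then show ?thesis unfolding nk
    by (simp add: algebra_simps of_nat_Suc)
qed



definition arcsB :: "int set \<Rightarrow> (int \<times> int) set" where
  "arcsB B = {(i, j). i \<in> B \<and> j \<in> B \<and> i < j \<and> (\<forall>k\<in>B. i < k \<longrightarrow> j \<le> k)}"

lemma Arc_UN: "Arc P = (\<Union>B\<in>P. arcsB B)"
  unfolding Arc_def arcsB_def by blast

definition sys :: "int set \<Rightarrow> (int \<times> int) set \<Rightarrow> bool" where
  "sys S A \<longleftrightarrow> (\<forall>i j. (i,j) \<in> A \<longrightarrow> i \<in> S \<and> j \<in> S \<and> i < j)
     \<and> (\<forall>i j j'. (i,j) \<in> A \<longrightarrow> (i,j') \<in> A \<longrightarrow> j = j')
     \<and> (\<forall>i i' j. (i,j) \<in> A \<longrightarrow> (i',j) \<in> A \<longrightarrow> i = i')"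

lemma part_same:
  assumes "partition_on S P" "B \<in> P" "B' \<in> P" "u \<in> B" "u \<in> B'"
  shows "B = B'"
  using assms unfolding partition_on_def disjoint_def by blast

lemma part_ex:
  assumes "partition_on S P" "u \<in> S"
  obtains B where "B \<in> P" "u \<in> B"
  using assms unfolding partition_on_def by blast

lemma Arc_block:
  assumes "partition_on S P" "(i,j) \<in> Arc P"
  obtains B where "B \<in> P" "i \<in> B" "j \<in> B" "i < j" "\<forall>k\<in>B. i < k \<longrightarrow> j \<le> k"
  using assms unfolding Arc_def by blast

lemma sys_Arc:
  assumes P: "partition_on S P"
  shows "sys S (Arc P)"
proof -
  have A: "i \<in> S \<and> j \<in> S \<and> i < j" if a: "(i,j) \<in> Arc P" for i j
  proof -
  from a obtain B where "B \<in> P" "i \<in> B" "j \<in> B" "i < j" by (rule Arc_block[OF P])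
  then show "i \<in> S \<and> j \<in> S \<and> i < j" using partition_onD1[OF P] by blast
  qed
  have B: "j = j'" if a: "(i,j) \<in> Arc P" "(i,j') \<in> Arc P" for i j j'
  proof -
  obtain B where B: "B \<in> P" "i \<in> B" "j \<in> B" "i < j" "\<forall>k\<in>B. i < k \<longrightarrow> j \<le> k" by (rule Arc_block[OF P a(1)])
  obtain B' where B': "B' \<in> P" "i \<in> B'" "j' \<in> B'" "i < j'" "\<forall>k\<in>B'. i < k \<longrightarrow> j' \<le> k" by (rule Arc_block[OF P a(2)])
  have "B = B'" using part_same[OF P B(1) B'(1) B(2) B'(2)] .
  then show "j = j'" using B B' by force
  qed
  have C: "i = i'" if a: "(i,j) \<in> Arc P" "(i',j) \<in> Arc P" for i i' j
  proof -
  obtain B where B: "B \<in> P" "i \<in> B" "j \<in> B" "i < j" "\<forall>k\<in>B. i < k \<longrightarrow> j \<le> k" by (rule Arc_block[OF P a(1)])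
  obtain B' where B': "B' \<in> P" "i' \<in> B'" "j \<in> B'" "i' < j" "\<forall>k\<in>B'. i' < k \<longrightarrow> j \<le> k" by (rule Arc_block[OF P a(2)])
  have "B = B'" using part_same[OF P B(1) B'(1) B(3) B'(3)] .
  then show "i = i'" using B B' by (metis linorder_neqE_linordered_idom not_le)
  qed
  show ?thesis unfolding sys_def using A B C by blast
qed

lemma next_arc:
  assumes fin: "finite B" and u: "u \<in> B" and v: "v \<in> B" "u < v"
  shows "(u, Min {b\<in>B. u < b}) \<in> arcsB B \<and> Min {b\<in>B. u < b} \<le> v"
proof -
  let ?M = "{b\<in>B. u < b}"
  have fM: "finite ?M" using fin by simp
  have ne: "?M \<noteq> {}" using v by blast
  have "Min ?M \<in> ?M" using Min_in[OF fM ne] .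
  moreover have "\<forall>k\<in>B. u < k \<longrightarrow> Min ?M \<le> k" using Min_le[OF fM] by blast
  moreover have "Min ?M \<le> v" using Min_le[OF fM] v by blast
  ultimately show ?thesis using u unfolding arcsB_def by blast
qed

lemma chain_in_block:
  assumes fin: "finite B" and BP: "B \<in> P"
  shows "u \<in> B \<Longrightarrow> v \<in> B \<Longrightarrow> u \<le> v \<Longrightarrow> (u, v) \<in> (Arc P)\<^sup>*"
proof (induction "nat (v - u)" arbitrary: u rule: less_induct)
  case less
  show ?case
  proof (cases "u = v")
    case True then show ?thesis by simp
  next
    case False
    then have uv: "u < v" using less.prems by simp
    define m where "m = Min {b\<in>B. u < b}"
    have m: "(u, m) \<in> arcsB B" "m \<le> v" using next_arc[OF fin less.prems(1,2) uv] unfolding m_def by auto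
    have mB: "m \<in> B" "u < m" using m(1) unfolding arcsB_def by auto
    have "(u,m) \<in> Arc P" using m(1) BP unfolding Arc_UN by blast
    moreover have "(m, v) \<in> (Arc P)\<^sup>*"
      using less.hyps[of m] mB m(2) less.prems by auto
    ultimately show ?thesis by (rule converse_rtrancl_into_rtrancl)
  qed
qed

lemma block_eq:
  assumes fin: "finite S" and P: "partition_on S P" and BP: "B \<in> P" and x: "x \<in> B"
  shows "B = {y. (x, y) \<in> (Arc P \<union> (Arc P)\<inverse>)\<^sup>*}"
proof
  have finB: "finite B" using fin BP partition_onD1[OF P] by (metis Union_upper finite_subset)
  show "B \<subseteq> {y. (x, y) \<in> (Arc P \<union> (Arc P)\<inverse>)\<^sup>*}"
  proof
    fix y assume y: "y \<in> B"
    show "y \<in> {y. (x, y) \<in> (Arc P \<union> (Arc P)\<inverse>)\<^sup>*}"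
    proof (cases "x \<le> y")
      case True
      then have "(x,y) \<in> (Arc P)\<^sup>*" using chain_in_block[OF finB BP x y] by simp
      then show ?thesis by (simp add: in_rtrancl_UnI)
    next
      case False
      then have "(y,x) \<in> (Arc P)\<^sup>*" using chain_in_block[OF finB BP y x] by simp
      then have "(x,y) \<in> ((Arc P)\<inverse>)\<^sup>*" by (simp add: rtrancl_converse)
      then show ?thesis by (simp add: in_rtrancl_UnI)
    qed
  qed
  show "{y. (x, y) \<in> (Arc P \<union> (Arc P)\<inverse>)\<^sup>*} \<subseteq> B"
  proof
    fix y assume "y \<in> {y. (x, y) \<in> (Arc P \<union> (Arc P)\<inverse>)\<^sup>*}"
    then have "(x, y) \<in> (Arc P \<union> (Arc P)\<inverse>)\<^sup>*" by simp
    then show "y \<in> B"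
    proof (induction rule: rtrancl_induct)
      case base then show ?case using x .
    next
      case (step y z)
      then show ?case
      proof (cases "(y,z) \<in> Arc P")
        case True
        obtain B' where "B' \<in> P" "y \<in> B'" "z \<in> B'" by (rule Arc_block[OF P True])
        then show ?thesis using part_same[OF P BP] step.IH by blast
      next
        case False
        then have "(z,y) \<in> Arc P" using step.hyps by blast
        then obtain B' where "B' \<in> P" "z \<in> B'" "y \<in> B'" by (rule Arc_block[OF P])
        then show ?thesis using part_same[OF P BP] step.IH by blast
      qed
    qed
  qed
qed

lemma Arc_inj:
  assumes fin: "finite S" and P: "partition_on S P" and Q: "partition_on S Q" and eq: "Arc P = Arc Q"
  shows "P = Q"
proof -
  have sub: "P \<subseteq> Q" if fin: "finite S" and P: "partition_on S P" and Q: "partition_on S Q"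
    and eq: "Arc P = Arc Q" for P Q
  proof
    fix B assume BP: "B \<in> P"
    then obtain x where x: "x \<in> B" using partition_onD3[OF P] by (metis equals0I)
    then have "x \<in> S" using BP partition_onD1[OF P] by blast
    then obtain C where C: "C \<in> Q" "x \<in> C" by (rule part_ex[OF Q])
    have "B = C" using block_eq[OF fin P BP x] block_eq[OF fin Q C] eq by simp
    then show "B \<in> Q" using C by simp
  qed
  show ?thesis using sub[OF fin P Q eq] sub[OF fin Q P eq[symmetric]] by blast
qed

lemma prev_arc:
  assumes fin: "finite B" and u: "u \<in> B" and v: "v \<in> B" "v < u"
  shows "(Max {b\<in>B. b < u}, u) \<in> arcsB B"
proof -
  let ?M = "{b\<in>B. b < u}"
  have fM: "finite ?M" using fin by simp
  have ne: "?M \<noteq> {}" using v by blast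
  have m: "Max ?M \<in> ?M" using Max_in[OF fM ne] .
  have "\<forall>k\<in>B. Max ?M < k \<longrightarrow> u \<le> k"
  proof (intro ballI impI)
    fix k assume k: "k \<in> B" "Max ?M < k"
    show "u \<le> k"
    proof (rule ccontr)
      assume "\<not> u \<le> k"
      then have "k \<in> ?M" using k by simp
      then have "k \<le> Max ?M" using Max_ge[OF fM] by blast
      then show False using k by simp
    qed
  qed
  then show ?thesis using u m unfolding arcsB_def by blast
qed

lemma arcsB_merge:
  assumes "i \<in> Bi" "j \<in> Bj" "\<forall>k\<in>Bi. k \<le> i" "\<forall>k\<in>Bj. j \<le> k" "i < j"
  shows "arcsB (Bi \<union> Bj) = insert (i,j) (arcsB Bi \<union> arcsB Bj)"
proof (rule set_eqI, clarify)
  fix u v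
  have a1: "(u,v) \<in> insert (i,j) (arcsB Bi \<union> arcsB Bj)" if h: "(u,v) \<in> arcsB (Bi \<union> Bj)"
  proof -
    have h1: "u \<in> Bi \<union> Bj" "v \<in> Bi \<union> Bj" "u < v" and h2: "\<forall>k\<in>Bi \<union> Bj. u < k \<longrightarrow> v \<le> k"
      using h unfolding arcsB_def by auto
    show ?thesis
    proof (cases "u \<in> Bi")
      case True
      show ?thesis
      proof (cases "v \<in> Bi")
        case True
        then show ?thesis using \<open>u \<in> Bi\<close> h1 h2 unfolding arcsB_def by blast
      next
        case False
        then have "v \<in> Bj" using h1 by blast
        then have "j \<le> v" using assms by blast
        have "u = i"
        proof (rule ccontr)
          assume "u \<noteq> i"
          then have "u < i" using assms True by force
          then have "v \<le> i" using h2 assms by blast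
          then show False using \<open>j \<le> v\<close> assms by simp
        qed
        moreover have "v = j"
        proof -
          have "v \<le> j" using h2 assms \<open>u = i\<close> by blast
          then show ?thesis using \<open>j \<le> v\<close> by simp
        qed
        ultimately show ?thesis by simp
      qed
    next
      case False
      then have "u \<in> Bj" using h1 by blast
      then have "j \<le> u" using assms by blast
      show ?thesis
      proof (cases "v \<in> Bj")
        case True
        then show ?thesis using \<open>u \<in> Bj\<close> h1 h2 unfolding arcsB_def by blast
      next
        case False
        then have "v \<le> i" using h1 assms by blast
        then show ?thesis using \<open>j \<le> u\<close> h1 assms by simp
      qed
    qed
  qed
  have a2: "(u,v) \<in> arcsB (Bi \<union> Bj)" if h: "(u,v) \<in> insert (i,j) (arcsB Bi \<union> arcsB Bj)"
  proof -
    consider "(u,v) = (i,j)" | "(u,v) \<in> arcsB Bi" | "(u,v) \<in> arcsB Bj" using h by blast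
    then show ?thesis
    proof cases
      case 1
      then show ?thesis using assms unfolding arcsB_def by force
    next
      case 2
      then have "u \<in> Bi" "v \<in> Bi" "u < v" "\<forall>k\<in>Bi. u < k \<longrightarrow> v \<le> k" unfolding arcsB_def by auto
      moreover have "\<forall>k\<in>Bj. u < k \<longrightarrow> v \<le> k"
      proof (intro ballI impI)
        fix k assume "k \<in> Bj" "u < k"
        then show "v \<le> k" using assms \<open>v \<in> Bi\<close> by force
      qed
      ultimately show ?thesis unfolding arcsB_def by blast
    next
      case 3
      then have "u \<in> Bj" "v \<in> Bj" "u < v" "\<forall>k\<in>Bj. u < k \<longrightarrow> v \<le> k" unfolding arcsB_def by auto
      moreover have "\<forall>k\<in>Bi. u < k \<longrightarrow> v \<le> k"
      proof (intro ballI impI)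
        fix k assume "k \<in> Bi" "u < k"
        then show "v \<le> k" using assms \<open>u \<in> Bj\<close> by force
      qed
      ultimately show ?thesis unfolding arcsB_def by blast
    qed
  qed
  show "(u,v) \<in> arcsB (Bi \<union> Bj) \<longleftrightarrow> (u,v) \<in> insert (i,j) (arcsB Bi \<union> arcsB Bj)"
    using a1 a2 by blast
qed

lemma sys_mono: "sys S A \<Longrightarrow> B \<subseteq> A \<Longrightarrow> sys S B"
  unfolding sys_def by blast

lemma sys_finite: "finite S \<Longrightarrow> sys S A \<Longrightarrow> finite A"
  unfolding sys_def by (rule finite_subset[of A "S \<times> S"]) auto

lemma Arc_surj_aux:
  assumes fin: "finite S"
  shows "finite A \<Longrightarrow> sys S A \<longrightarrow> (\<exists>P. partition_on S P \<and> Arc P = A)"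
proof (induction A rule: finite_induct)
  case empty
  show ?case
  proof
    have "Arc ((\<lambda>x. {x}) ` S) = {}" unfolding Arc_UN arcsB_def by auto
    then show "\<exists>P. partition_on S P \<and> Arc P = {}" using partition_on_singletons by blast
  qed
next
  case (insert a F)
  obtain i j where a: "a = (i,j)" by force
  show ?case
  proof
    assume sA: "sys S (insert a F)"
    then have "sys S F" by (rule sys_mono) auto
    then obtain P where P: "partition_on S P" and AP: "Arc P = F" using insert.IH by blast
    have ij: "i \<in> S" "j \<in> S" "i < j" using sA a unfolding sys_def by auto
    have noout: "(i,j') \<notin> F" for j'
    proof
      assume "(i,j') \<in> F"
      then have "j' = j" using sA a unfolding sys_def by blast
      then show False using insert.hyps \<open>(i,j') \<in> F\<close> a by simp
    qed
    have noin: "(i',j) \<notin> F" for i'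
    proof
      assume "(i',j) \<in> F"
      then have "i' = i" using sA a unfolding sys_def by blast
      then show False using insert.hyps \<open>(i',j) \<in> F\<close> a by simp
    qed
    obtain Bi where Bi: "Bi \<in> P" "i \<in> Bi" by (rule part_ex[OF P ij(1)])
    obtain Bj where Bj: "Bj \<in> P" "j \<in> Bj" by (rule part_ex[OF P ij(2)])
    have finBi: "finite Bi" using fin Bi partition_onD1[OF P] by (metis Union_upper finite_subset)
    have finBj: "finite Bj" using fin Bj partition_onD1[OF P] by (metis Union_upper finite_subset)
    have Bimax: "\<forall>k\<in>Bi. k \<le> i"
    proof (rule ccontr)
      assume "\<not> (\<forall>k\<in>Bi. k \<le> i)"
      then obtain k where "k \<in> Bi" "i < k" by force
      then have "(i, Min {b\<in>Bi. i < b}) \<in> arcsB Bi" using next_arc[OF finBi Bi(2)] by blast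
      then have "(i, Min {b\<in>Bi. i < b}) \<in> F" using AP Bi(1) unfolding Arc_UN by blast
      then show False using noout by blast
    qed
    have Bjmin: "\<forall>k\<in>Bj. j \<le> k"
    proof (rule ccontr)
      assume "\<not> (\<forall>k\<in>Bj. j \<le> k)"
      then obtain k where "k \<in> Bj" "k < j" by force
      then have "(Max {b\<in>Bj. b < j}, j) \<in> arcsB Bj" using prev_arc[OF finBj Bj(2)] by blast
      then have "(Max {b\<in>Bj. b < j}, j) \<in> F" using AP Bj(1) unfolding Arc_UN by blast
      then show False using noin by blast
    qed
    have neq: "Bi \<noteq> Bj" using Bimax Bj(2) ij(3) by force
    define P' where "P' = insert (Bi \<union> Bj) (P - {Bi, Bj})"
    have "partition_on S P'"
      using P Bi(1) Bj(1) neq unfolding P'_def partition_on_def disjoint_def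
      by (auto; blast)
    moreover have "Arc P' = insert a F"
    proof -
      have "Arc P' = arcsB (Bi \<union> Bj) \<union> (\<Union>B\<in>P - {Bi, Bj}. arcsB B)"
        unfolding P'_def Arc_UN by simp
      also have "\<dots> = insert (i,j) (arcsB Bi \<union> arcsB Bj \<union> (\<Union>B\<in>P - {Bi, Bj}. arcsB B))"
        using arcsB_merge[OF Bi(2) Bj(2) Bimax Bjmin ij(3)] by auto
      also have "arcsB Bi \<union> arcsB Bj \<union> (\<Union>B\<in>P - {Bi, Bj}. arcsB B) = Arc P"
        unfolding Arc_UN using Bi(1) Bj(1) by blast
      finally show ?thesis using AP a by simp
    qed
    ultimately show "\<exists>P. partition_on S P \<and> Arc P = insert a F" by blast
  qed
qed

lemma Arc_surj:
  assumes "finite S" "sys S A"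
  shows "\<exists>P. partition_on S P \<and> Arc P = A"
  using Arc_surj_aux[OF assms(1) sys_finite[OF assms]] assms(2) by blast

lemma Arc_bij:
  assumes fin: "finite S"
  shows "bij_betw Arc {P. partition_on S P \<and> \<Phi> (Arc P)} {A. sys S A \<and> \<Phi> A}"
  unfolding bij_betw_def
proof
  show "inj_on Arc {P. partition_on S P \<and> \<Phi> (Arc P)}"
    unfolding inj_on_def using Arc_inj[OF fin] by blast
  show "Arc ` {P. partition_on S P \<and> \<Phi> (Arc P)} = {A. sys S A \<and> \<Phi> A}"
  proof
    show "Arc ` {P. partition_on S P \<and> \<Phi> (Arc P)} \<subseteq> {A. sys S A \<and> \<Phi> A}"
      using sys_Arc by auto
    show "{A. sys S A \<and> \<Phi> A} \<subseteq> Arc ` {P. partition_on S P \<and> \<Phi> (Arc P)}"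
    proof
      fix A assume "A \<in> {A. sys S A \<and> \<Phi> A}"
      then obtain P where "partition_on S P" "Arc P = A" "\<Phi> A" using Arc_surj[OF fin] by blast
      then show "A \<in> Arc ` {P. partition_on S P \<and> \<Phi> (Arc P)}" by blast
    qed
  qed
qed



definition ncA :: "(int \<times> int) set \<Rightarrow> bool" where
  "ncA A \<longleftrightarrow> (\<forall>i j k l. (i,k) \<in> A \<longrightarrow> (j,l) \<in> A \<longrightarrow> i < j \<longrightarrow> j < k \<longrightarrow> k < l \<longrightarrow> False)"

definition fA :: "'a \<Rightarrow> 'a \<Rightarrow> int \<times> int \<Rightarrow> 'a::comm_ring_1" where
  "fA x y a = (if snd a = fst a + 1 then y else x)"

definition wA :: "'a \<Rightarrow> 'a \<Rightarrow> (int \<times> int) set \<Rightarrow> 'a::comm_ring_1" where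
  "wA x y A = (\<Prod>a\<in>A. fA x y a)"

definition NCAs :: "int \<Rightarrow> int \<Rightarrow> (int \<times> int) set set" where
  "NCAs a b = {A. sys {a..b} A \<and> ncA A}"

definition TA :: "nat \<Rightarrow> 'a \<Rightarrow> 'a \<Rightarrow> 'a::comm_ring_1" where
  "TA n x y = (\<Sum>A\<in>NCAs 1 (int n). wA x y A)"

lemma noncrossing_ncA: "noncrossing P \<longleftrightarrow> ncA (Arc P)"
  unfolding noncrossing_def ncA_def by blast

lemma weight_eq:
  assumes "finite A"
  shows "x ^ card {a\<in>A. snd a \<noteq> fst a + 1} * y ^ card {a\<in>A. snd a = fst a + 1} = wA x y A"
proof -
  have "wA x y A = (\<Prod>a\<in>A \<inter> {a. snd a = fst a + 1}. y) * (\<Prod>a\<in>A \<inter> - {a. snd a = fst a + 1}. x)"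
    unfolding wA_def fA_def by (rule prod.If_cases[OF assms])
  also have "\<dots> = y ^ card {a\<in>A. snd a = fst a + 1} * x ^ card {a\<in>A. snd a \<noteq> fst a + 1}"
    by (simp add: Int_def Collect_conj_eq[symmetric] Compl_eq)
  finally show ?thesis by (simp add: mult.commute)
qed

lemma finite_NCAs: "finite (NCAs a b)"
proof -
  have "NCAs a b \<subseteq> Pow ({a..b} \<times> {a..b})" unfolding NCAs_def sys_def by auto
  then show ?thesis by (rule finite_subset) simp
qed

lemma Cat_TA: "Cat n x y = TA n x y"
proof -
  have Cov: "Cov P = {a\<in>Arc P. snd a = fst a + 1}" for P unfolding Cov_def by auto
  have AC: "Arc P - Cov P = {a\<in>Arc P. snd a \<noteq> fst a + 1}" for P unfolding Cov_def by auto
  have NC: "NC n = {P. partition_on {1..int n} P \<and> ncA (Arc P)}"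
    unfolding NC_def noncrossing_ncA ..
  have bij: "bij_betw Arc (NC n) (NCAs 1 (int n))"
    unfolding NC NCAs_def by (rule Arc_bij) simp
  have "Cat n x y = (\<Sum>P\<in>NC n. wA x y (Arc P))"
    unfolding Cat_def
  proof (rule sum.cong[OF refl])
    fix P assume "P \<in> NC n"
    then have "sys {1..int n} (Arc P)" using sys_Arc unfolding NC_def by blast
    then have "finite (Arc P)" by (rule sys_finite[rotated]) simp
    then show "x ^ card (Arc P - Cov P) * y ^ card (Cov P) = wA x y (Arc P)"
      unfolding AC unfolding Cov by (rule weight_eq)
  qed
  also have "\<dots> = TA n x y"
    unfolding TA_def by (rule sum.reindex_bij_betw[OF bij])
  finally show ?thesis .
qed

definition sh :: "int \<Rightarrow> (int \<times> int) set \<Rightarrow> (int \<times> int) set" where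
  "sh c A = (\<lambda>(i,j). (i+c, j+c)) ` A"

lemma sh_mem: "(u,v) \<in> sh c A \<longleftrightarrow> (u-c, v-c) \<in> A"
  unfolding sh_def by force

lemma sh_sh: "sh (-c) (sh c A) = A"
  unfolding sh_def by (auto simp: image_iff) force

lemma sh_in:
  assumes "A \<in> NCAs a b"
  shows "sh c A \<in> NCAs (a+c) (b+c)"
proof -
  have s: "\<forall>i j. (i,j) \<in> A \<longrightarrow> i \<in> {a..b} \<and> j \<in> {a..b} \<and> i < j"
    "\<forall>i j j'. (i,j) \<in> A \<longrightarrow> (i,j') \<in> A \<longrightarrow> j = j'"
    "\<forall>i i' j. (i,j) \<in> A \<longrightarrow> (i',j) \<in> A \<longrightarrow> i = i'"
    "\<forall>i j k l. (i,k) \<in> A \<longrightarrow> (j,l) \<in> A \<longrightarrow> i < j \<longrightarrow> j < k \<longrightarrow> k < l \<longrightarrow> False"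
    using assms unfolding NCAs_def sys_def ncA_def by blast+
  have 1: "i \<in> {a+c..b+c} \<and> j \<in> {a+c..b+c} \<and> i < j" if "(i,j) \<in> sh c A" for i j
    using s(1) that unfolding sh_mem by fastforce
  have 2: "j = j'" if "(i,j) \<in> sh c A" "(i,j') \<in> sh c A" for i j j'
    using s(2) that unfolding sh_mem by fastforce
  have 3: "i = i'" if "(i,j) \<in> sh c A" "(i',j) \<in> sh c A" for i i' j
    using s(3) that unfolding sh_mem by fastforce
  have 4: "False" if "(i,k) \<in> sh c A" "(j,l) \<in> sh c A" "i < j" "j < k" "k < l" for i j k l
  proof -
    have "(i-c,k-c) \<in> A" "(j-c,l-c) \<in> A" using that unfolding sh_mem by auto
    then show False using s(4) that by force
  qed
  show ?thesis unfolding NCAs_def sys_def ncA_def using 1 2 3 4 by blast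
qed

lemma wA_sh: "wA x y (sh c A) = wA x y A"
proof -
  have inj: "inj_on (\<lambda>(i,j). (i+c, j+c)) A" by (auto intro: inj_onI)
  show ?thesis unfolding wA_def sh_def
    by (subst prod.reindex[OF inj]) (auto simp: fA_def intro: prod.cong)
qed

lemma NCAs_shift_sum:
  "(\<Sum>A\<in>NCAs (a+c) (b+c). wA x y A) = (\<Sum>A\<in>NCAs a b. wA x y A)"
proof -
  have bij: "bij_betw (sh c) (NCAs a b) (NCAs (a+c) (b+c))"
  proof (rule bij_betw_byWitness[where f'="sh (-c)"])
    show "\<forall>A\<in>NCAs a b. sh (- c) (sh c A) = A" using sh_sh by blast
    show "\<forall>A\<in>NCAs (a + c) (b + c). sh c (sh (- c) A) = A" using sh_sh[of "-c"] by simp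
    show "sh c ` NCAs a b \<subseteq> NCAs (a + c) (b + c)" using sh_in by blast
    show "sh (- c) ` NCAs (a + c) (b + c) \<subseteq> NCAs a b" using sh_in[of _ "a+c" "b+c" "-c"] by auto
  qed
  have "(\<Sum>A\<in>NCAs a b. wA x y (sh c A)) = (\<Sum>A\<in>NCAs (a+c) (b+c). wA x y A)"
    by (rule sum.reindex_bij_betw[OF bij])
  then show ?thesis by (simp add: wA_sh)
qed

lemma NCAs_TA:
  assumes "a \<le> b + 1"
  shows "(\<Sum>A\<in>NCAs a b. wA x y A) = TA (nat (b - a + 1)) x y"
  using NCAs_shift_sum[where a=1 and c="a - 1" and b="b - a + 1" and x=x and y=y] assms unfolding TA_def by simp

lemma NCAs_iff: "A \<in> NCAs a b \<longleftrightarrow>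
   (\<forall>i j. (i,j) \<in> A \<longrightarrow> a \<le> i \<and> i \<le> b \<and> a \<le> j \<and> j \<le> b \<and> i < j) \<and>
   (\<forall>i j j'. (i,j) \<in> A \<longrightarrow> (i,j') \<in> A \<longrightarrow> j = j') \<and>
   (\<forall>i i' j. (i,j) \<in> A \<longrightarrow> (i',j) \<in> A \<longrightarrow> i = i') \<and>
   (\<forall>i j k l. (i,k) \<in> A \<longrightarrow> (j,l) \<in> A \<longrightarrow> i < j \<longrightarrow> j < k \<longrightarrow> k < l \<longrightarrow> False)"
  unfolding NCAs_def sys_def ncA_def by auto

lemma wA_insert_union:
  assumes "finite R" "finite I" "R \<inter> I = {}" "a \<notin> R \<union> I"
  shows "wA x y (insert a (R \<union> I)) = fA x y a * wA x y R * wA x y I"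
  using assms unfolding wA_def by (simp add: prod.union_disjoint mult.assoc)

lemma finite_NCAs_mem: "A \<in> NCAs a b \<Longrightarrow> finite A"
  unfolding NCAs_def by (rule sys_finite[rotated]) auto

lemma NCAs_restr: "A \<in> NCAs a b \<Longrightarrow> A \<inter> ({c..d}\<times>{c..d}) \<in> NCAs c d"
  unfolding NCAs_iff by auto

lemma NCAs_D:
  assumes "A \<in> NCAs a b"
  shows "\<And>i j. (i,j) \<in> A \<Longrightarrow> a \<le> i \<and> i \<le> b \<and> a \<le> j \<and> j \<le> b \<and> i < j"
    "\<And>i j j'. (i,j) \<in> A \<Longrightarrow> (i,j') \<in> A \<Longrightarrow> j = j'"
    "\<And>i i' j. (i,j) \<in> A \<Longrightarrow> (i',j) \<in> A \<Longrightarrow> i = i'"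
    "\<And>i j k l. (i,k) \<in> A \<Longrightarrow> (j,l) \<in> A \<Longrightarrow> i < j \<Longrightarrow> j < k \<Longrightarrow> k < l \<Longrightarrow> False"
  using assms unfolding NCAs_iff by blast+

lemma partA:
  assumes m: "1 \<le> m" "m < N"
  shows "(\<Sum>A\<in>{A\<in>NCAs 1 N. (m,N) \<in> A}. wA x y A)
     = fA x y (m,N) * (\<Sum>R\<in>NCAs 1 m. wA x y R) * (\<Sum>I\<in>NCAs (m+1) (N-1). wA x y I)"
proof -
  define g where "g = (\<lambda>(R,I). insert (m,N) (R \<union> I))"
  define h where "h A = (A \<inter> ({1..m}\<times>{1..m}), A \<inter> ({m+1..N-1}\<times>{m+1..N-1}))" for A
  define Y where "Y = NCAs 1 m \<times> NCAs (m+1) (N-1)"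
  define Z where "Z = {A\<in>NCAs 1 N. (m,N) \<in> A}"
  have F1: "h (g RI) = RI" if RIY: "RI \<in> Y" for RI
  proof -
    obtain R I where RI: "RI = (R,I)" "R \<in> NCAs 1 m" "I \<in> NCAs (m+1) (N-1)"
      using RIY unfolding Y_def by (cases RI) auto
    note R = NCAs_D(1)[OF RI(2)]
    note I = NCAs_D(1)[OF RI(3)]
    have b1: "R \<subseteq> {1..m}\<times>{1..m}" by (auto dest!: R)
    have b2: "I \<subseteq> {m+1..N-1}\<times>{m+1..N-1}" by (auto dest!: I)
    have b3: "I \<inter> {1..m}\<times>{1..m} = {}" by (auto dest!: I)
    have b4: "R \<inter> {m+1..N-1}\<times>{m+1..N-1} = {}" by (auto dest!: R)
    have "insert (m,N) (R \<union> I) \<inter> ({1..m}\<times>{1..m}) = R"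
      using b1 b3 m by auto
    moreover have "insert (m,N) (R \<union> I) \<inter> ({m+1..N-1}\<times>{m+1..N-1}) = I"
      using b2 b4 m by auto
    ultimately show ?thesis unfolding RI(1) g_def h_def by simp
  qed
  have F2: "g (h A) = A" if "A \<in> Z" for A
  proof -
    have A: "\<forall>i j. (i,j) \<in> A \<longrightarrow> 1 \<le> i \<and> i \<le> N \<and> 1 \<le> j \<and> j \<le> N \<and> i < j"
      "\<forall>i j j'. (i,j) \<in> A \<longrightarrow> (i,j') \<in> A \<longrightarrow> j = j'"
      "\<forall>i i' j. (i,j) \<in> A \<longrightarrow> (i',j) \<in> A \<longrightarrow> i = i'"
      "\<forall>i j k l. (i,k) \<in> A \<longrightarrow> (j,l) \<in> A \<longrightarrow> i < j \<longrightarrow> j < k \<longrightarrow> k < l \<longrightarrow> False"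
      and mN: "(m,N) \<in> A"
      using that unfolding Z_def by (auto simp: NCAs_iff)
    have cl: "(i,j) = (m,N) \<or> (i \<in> {1..m} \<and> j \<in> {1..m}) \<or> (i \<in> {m+1..N-1} \<and> j \<in> {m+1..N-1})"
      if ij: "(i,j) \<in> A" for i j
    proof (cases "j = N")
      case True
      then show ?thesis using A(3) ij mN by blast
    next
      case False
      have b: "1 \<le> i" "j \<le> N" "i < j" using A(1) ij by auto
      show ?thesis
      proof (cases "j \<le> m")
        case True then show ?thesis using b by auto
      next
        case jm: False
        have "i \<noteq> m" using A(2) ij mN False by blast
        moreover have "\<not> i < m" using A(4) ij mN jm False b by (meson not_le order_le_neq_trans)
        ultimately show ?thesis using b jm False by auto
      qed
    qed
    have "A \<subseteq> insert (m,N) (A \<inter> ({1..m}\<times>{1..m}) \<union> A \<inter> ({m+1..N-1}\<times>{m+1..N-1}))"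
    proof
      fix a assume a: "a \<in> A"
      obtain i j where ij: "a = (i,j)" by force
      show "a \<in> insert (m,N) (A \<inter> ({1..m}\<times>{1..m}) \<union> A \<inter> ({m+1..N-1}\<times>{m+1..N-1}))"
        using cl[of i j] a ij by auto
    qed
    then show ?thesis unfolding g_def h_def using mN by auto
  qed
  have F3: "g RI \<in> Z" if RIY: "RI \<in> Y" for RI
  proof -
    obtain R I where RI: "RI = (R,I)" "R \<in> NCAs 1 m" "I \<in> NCAs (m+1) (N-1)"
      using RIY unfolding Y_def by (cases RI) auto
    note R = NCAs_D[OF RI(2)]
    note I = NCAs_D[OF RI(3)]
    let ?A = "insert (m,N) (R \<union> I)"
    have "?A \<in> NCAs 1 N"
      unfolding NCAs_iff
      apply (intro conjI allI impI; elim insertE UnE)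
      using m apply (auto dest: R(2-4) I(2-4))
      apply (auto dest!: R(1) I(1))
      done
    then show ?thesis unfolding Z_def RI g_def by simp
  qed
  have F4: "h A \<in> Y" if "A \<in> Z" for A
  proof -
    have A: "\<forall>i j. (i,j) \<in> A \<longrightarrow> 1 \<le> i \<and> i \<le> N \<and> 1 \<le> j \<and> j \<le> N \<and> i < j"
      "\<forall>i j j'. (i,j) \<in> A \<longrightarrow> (i,j') \<in> A \<longrightarrow> j = j'"
      "\<forall>i i' j. (i,j) \<in> A \<longrightarrow> (i',j) \<in> A \<longrightarrow> i = i'"
      "\<forall>i j k l. (i,k) \<in> A \<longrightarrow> (j,l) \<in> A \<longrightarrow> i < j \<longrightarrow> j < k \<longrightarrow> k < l \<longrightarrow> False"
      using that unfolding Z_def by (auto simp: NCAs_iff)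
    show ?thesis unfolding Y_def h_def NCAs_iff using A using NCAs_restr that unfolding Z_def by auto
  qed
  have bij: "bij_betw g Y Z"
    by (rule bij_betw_byWitness[where f'=h]) (use F1 F2 F3 F4 in auto)
  have "(\<Sum>A\<in>Z. wA x y A) = (\<Sum>RI\<in>Y. wA x y (g RI))"
    by (rule sum.reindex_bij_betw[OF bij, symmetric])
  also have "\<dots> = (\<Sum>RI\<in>Y. fA x y (m,N) * wA x y (fst RI) * wA x y (snd RI))"
  proof (rule sum.cong[OF refl])
    fix RI assume "RI \<in> Y"
    then obtain R I where RI: "RI = (R,I)" "R \<in> NCAs 1 m" "I \<in> NCAs (m+1) (N-1)" unfolding Y_def by auto
    have R: "\<forall>i j. (i,j) \<in> R \<longrightarrow> 1 \<le> i \<and> i \<le> m \<and> 1 \<le> j \<and> j \<le> m \<and> i < j"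
      using RI(2)[unfolded NCAs_iff] by auto
    have I: "\<forall>i j. (i,j) \<in> I \<longrightarrow> m+1 \<le> i \<and> i \<le> N-1 \<and> m+1 \<le> j \<and> j \<le> N-1 \<and> i < j"
      using RI(3)[unfolded NCAs_iff] by auto
    have d: "R \<inter> I = {}" using R I by fastforce
    have nm: "(m,N) \<notin> R \<union> I" using R I m by fastforce
    show "wA x y (g RI) = fA x y (m,N) * wA x y (fst RI) * wA x y (snd RI)"
      unfolding RI g_def using wA_insert_union[OF finite_NCAs_mem[OF RI(2)] finite_NCAs_mem[OF RI(3)] d nm] by simp
  qed
  also have "\<dots> = (\<Sum>R\<in>NCAs 1 m. \<Sum>I\<in>NCAs (m+1) (N-1). fA x y (m,N) * wA x y R * wA x y I)"
    unfolding Y_def by (simp add: sum.cartesian_product case_prod_beta)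
  also have "\<dots> = fA x y (m,N) * ((\<Sum>R\<in>NCAs 1 m. wA x y R) * (\<Sum>I\<in>NCAs (m+1) (N-1). wA x y I))"
    by (subst sum_product) (simp add: sum_distrib_left mult.assoc)
  finally show ?thesis unfolding Z_def by (simp add: mult.assoc)
qed

lemma NCAs_empty: "b < a + 1 \<Longrightarrow> NCAs a b = {{}}"
proof -
  assume ab: "b < a + 1"
  have "A = {}" if "A \<in> NCAs a b" for A
  proof -
    have "(i,j) \<notin> A" for i j using NCAs_D(1)[OF that, of i j] ab by auto
    then show ?thesis by auto
  qed
  moreover have "{} \<in> NCAs a b" unfolding NCAs_iff by simp
  ultimately show ?thesis by blast
qed

lemma TA0: "TA 0 x y = 1"
  unfolding TA_def using NCAs_empty[of 0 1] by (simp add: wA_def)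

lemma TA_rec:
  assumes n: "n \<ge> 1"
  shows "TA n x y = TA (n-1) x y + (\<Sum>m\<in>{1..n-1}. fA x y (int m, int n) * TA m x y * TA (n-1-m) x y)"
proof -
  define N where "N = int n"
  define X where "X = NCAs 1 N"
  define X0 where "X0 = {A\<in>X. \<forall>i. (i,N) \<notin> A}"
  define Z where "Z M = {A\<in>X. (M,N) \<in> A}" for M
  have fX: "finite X" unfolding X_def by (rule finite_NCAs)
  have XU: "X = X0 \<union> (\<Union>m\<in>{1..n-1}. Z (int m))"
  proof
    show "X \<subseteq> X0 \<union> (\<Union>m\<in>{1..n-1}. Z (int m))"
    proof
      fix A assume A: "A \<in> X"
      show "A \<in> X0 \<union> (\<Union>m\<in>{1..n-1}. Z (int m))"
      proof (cases "\<exists>i. (i,N) \<in> A")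
        case True
        then obtain i where i: "(i,N) \<in> A" by blast
        have "1 \<le> i" "i < N" using NCAs_D(1)[OF A[unfolded X_def] i] by auto
        then have ni: "nat i \<in> {1..n-1}" "int (nat i) = i" unfolding N_def by auto
        have "A \<in> Z (int (nat i))" unfolding Z_def ni(2) using i A by blast
        then show ?thesis using ni(1) by blast
      next
        case False
        then show ?thesis using A unfolding X0_def by blast
      qed
    qed
    show "X0 \<union> (\<Union>m\<in>{1..n-1}. Z (int m)) \<subseteq> X" unfolding X0_def Z_def by blast
  qed
  have "TA n x y = (\<Sum>A\<in>X. wA x y A)" unfolding TA_def X_def N_def ..
  also have "\<dots> = (\<Sum>A\<in>X0. wA x y A) + (\<Sum>A\<in>(\<Union>m\<in>{1..n-1}. Z (int m)). wA x y A)"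
    unfolding XU
  proof (rule sum.union_disjoint)
    show "finite X0" using fX unfolding X0_def by simp
    show "finite (\<Union>m\<in>{1..n-1}. Z (int m))" using fX unfolding Z_def by auto
    show "X0 \<inter> (\<Union>m\<in>{1..n-1}. Z (int m)) = {}" unfolding X0_def Z_def by blast
  qed
  also have "(\<Sum>A\<in>(\<Union>m\<in>{1..n-1}. Z (int m)). wA x y A) = (\<Sum>m\<in>{1..n-1}. \<Sum>A\<in>Z (int m). wA x y A)"
  proof (rule sum.UNION_disjoint)
    show "finite {1..n-1}" by simp
    show "\<forall>i\<in>{1..n-1}. finite (Z (int i))" using fX unfolding Z_def by simp
    show "\<forall>i\<in>{1..n-1}. \<forall>j\<in>{1..n-1}. i \<noteq> j \<longrightarrow> Z (int i) \<inter> Z (int j) = {}"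
      unfolding Z_def X_def using NCAs_D(3) by fastforce
  qed
  also have "X0 = NCAs 1 (N-1)"
  proof
    show "X0 \<subseteq> NCAs 1 (N - 1)"
    proof
      fix A assume A: "A \<in> X0"
      then have AX: "A \<in> NCAs 1 N" and no: "\<forall>i. (i,N) \<notin> A" unfolding X0_def X_def by auto
      have r: "1 \<le> i \<and> i \<le> N - 1 \<and> 1 \<le> j \<and> j \<le> N - 1 \<and> i < j" if ij: "(i,j) \<in> A" for i j
      proof -
        have "j \<noteq> N" using no ij by blast
        then show ?thesis using NCAs_D(1)[OF AX ij] by auto
      qed
      show "A \<in> NCAs 1 (N-1)"
        unfolding NCAs_iff using r NCAs_D(2-4)[OF AX] by blast
    qed
    show "NCAs 1 (N - 1) \<subseteq> X0"
    proof
      fix A assume A: "A \<in> NCAs 1 (N - 1)"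
      note D = NCAs_D[OF A]
      have r: "1 \<le> i \<and> i \<le> N \<and> 1 \<le> j \<and> j \<le> N \<and> i < j" if ij: "(i,j) \<in> A" for i j
        using D(1)[OF ij] by auto
      have "A \<in> NCAs 1 N"
        unfolding NCAs_iff
        apply (intro conjI)
        apply (use r in blast)
        apply (use D(2) in blast)
        apply (use D(3) in blast)
        apply (use D(4) in blast)
        done
      moreover have "\<forall>i. (i,N) \<notin> A"
      proof (intro allI notI)
        fix i assume "(i,N) \<in> A"
        then show False using D(1)[of i N] by simp
      qed
      ultimately show "A \<in> X0" unfolding X0_def X_def by blast
    qed
  qed
  also have "(\<Sum>A\<in>NCAs 1 (N-1). wA x y A) = TA (n-1) x y"
    using NCAs_TA[of 1 "N-1" x y] n unfolding N_def by (simp add: nat_diff_distrib)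
  also have "(\<Sum>m\<in>{1..n-1}. \<Sum>A\<in>Z (int m). wA x y A)
      = (\<Sum>m\<in>{1..n-1}. fA x y (int m, int n) * TA m x y * TA (n-1-m) x y)"
  proof (rule sum.cong[OF refl])
    fix m assume m: "m \<in> {1..n-1}"
    have "(\<Sum>A\<in>Z (int m). wA x y A)
        = fA x y (int m, N) * (\<Sum>R\<in>NCAs 1 (int m). wA x y R) * (\<Sum>I\<in>NCAs (int m+1) (N-1). wA x y I)"
      unfolding Z_def X_def by (rule partA) (use m in \<open>auto simp: N_def\<close>)
    also have "(\<Sum>R\<in>NCAs 1 (int m). wA x y R) = TA m x y"
      using NCAs_TA[of 1 "int m" x y] by simp
    also have "(\<Sum>I\<in>NCAs (int m+1) (N-1). wA x y I) = TA (n-1-m) x y"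
    proof -
      have "int m + 1 \<le> int n" using m n by auto
      then show ?thesis using NCAs_TA[of "int m + 1" "N-1" x y] m unfolding N_def by (simp add: nat_diff_distrib)
    qed
    finally show "(\<Sum>A\<in>Z (int m). wA x y A) = fA x y (int m, int n) * TA m x y * TA (n-1-m) x y"
      unfolding N_def .
  qed
  finally show ?thesis .
qed

lemma TA1: "TA 1 x y = 1"
  using TA_rec[of 1 x y] TA0 by simp

lemma TA_rec2:
  assumes n: "n \<ge> 2"
  shows "TA n x y = (1+y) * TA (n-1) x y + x * (\<Sum>i=1..n-2. TA i x y * TA (n-1-i) x y)"
proof -
  have split: "{1..n-1} = insert (n-1) {1..n-2}" using n by auto
  have "(\<Sum>m\<in>{1..n-1}. fA x y (int m, int n) * TA m x y * TA (n-1-m) x y)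
     = fA x y (int (n-1), int n) * TA (n-1) x y * TA (n-1-(n-1)) x y
       + (\<Sum>m\<in>{1..n-2}. fA x y (int m, int n) * TA m x y * TA (n-1-m) x y)"
    unfolding split by (subst sum.insert) (use n in auto)
  also have "fA x y (int (n-1), int n) = y" using n by (simp add: fA_def)
  also have "(\<Sum>m\<in>{1..n-2}. fA x y (int m, int n) * TA m x y * TA (n-1-m) x y)
      = x * (\<Sum>i=1..n-2. TA i x y * TA (n-1-i) x y)"
    unfolding sum_distrib_left
    by (rule sum.cong[OF refl]) (use n in \<open>auto simp: fA_def mult.assoc\<close>)
  finally show ?thesis using TA_rec[of n x y] n by (simp add: algebra_simps TA0)
qed



definition mir :: "(int \<times> int) set \<Rightarrow> (int \<times> int) set" where
  "mir A = (\<lambda>(i,j). (-j,-i)) ` A"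

lemma mir_mem: "(u,v) \<in> mir A \<longleftrightarrow> (-v,-u) \<in> A"
  unfolding mir_def by force

definition NCBs :: "int \<Rightarrow> (int \<times> int) set set" where
  "NCBs N = {A. sys {-N..N} A \<and> (\<forall>i j. (i,j) \<in> A \<longleftrightarrow> (-j,-i) \<in> A) \<and> (\<forall>v. (-v,v) \<notin> A)
     \<and> (\<forall>i j k l. (i,k) \<in> A \<longrightarrow> (j,l) \<in> A \<longrightarrow> i < j \<longrightarrow> j < k \<longrightarrow> k < l \<longrightarrow> (i,k) = (-l,-j))}"

definition wB :: "'a \<Rightarrow> 'a \<Rightarrow> (int \<times> int) set \<Rightarrow> 'a::comm_ring_1" where
  "wB x y A = (\<Prod>a\<in>{a\<in>A. fst a + snd a > 0}. fA x y a)"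

definition TB :: "nat \<Rightarrow> 'a \<Rightarrow> 'a \<Rightarrow> 'a::comm_ring_1" where
  "TB n x y = (\<Sum>A\<in>NCBs (int n). wB x y A)"

lemma NCBs_iff: "A \<in> NCBs N \<longleftrightarrow>
   (\<forall>i j. (i,j) \<in> A \<longrightarrow> -N \<le> i \<and> i \<le> N \<and> -N \<le> j \<and> j \<le> N \<and> i < j) \<and>
   (\<forall>i j j'. (i,j) \<in> A \<longrightarrow> (i,j') \<in> A \<longrightarrow> j = j') \<and>
   (\<forall>i i' j. (i,j) \<in> A \<longrightarrow> (i',j) \<in> A \<longrightarrow> i = i') \<and>
   (\<forall>i j. (i,j) \<in> A \<longrightarrow> (-j,-i) \<in> A) \<and>
   (\<forall>v. (-v,v) \<notin> A) \<and>
   (\<forall>i j k l. (i,k) \<in> A \<longrightarrow> (j,l) \<in> A \<longrightarrow> i < j \<longrightarrow> j < k \<longrightarrow> k < l \<longrightarrow> (i,k) = (-l,-j))"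
  unfolding NCBs_def sys_def by (auto; metis minus_minus)

lemma NCBs_D:
  assumes "A \<in> NCBs N"
  shows "\<And>i j. (i,j) \<in> A \<Longrightarrow> -N \<le> i \<and> i \<le> N \<and> -N \<le> j \<and> j \<le> N \<and> i < j"
    "\<And>i j j'. (i,j) \<in> A \<Longrightarrow> (i,j') \<in> A \<Longrightarrow> j = j'"
    "\<And>i i' j. (i,j) \<in> A \<Longrightarrow> (i',j) \<in> A \<Longrightarrow> i = i'"
    "\<And>i j. (i,j) \<in> A \<Longrightarrow> (-j,-i) \<in> A"
    "\<And>v. (-v,v) \<notin> A"
    "\<And>i j k l. (i,k) \<in> A \<Longrightarrow> (j,l) \<in> A \<Longrightarrow> i < j \<Longrightarrow> j < k \<Longrightarrow> k < l \<Longrightarrow> (i,k) = (-l,-j)"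
  using assms unfolding NCBs_iff by blast+

lemma finite_NCBs_mem: "A \<in> NCBs N \<Longrightarrow> finite A"
  unfolding NCBs_def by (rule sys_finite[rotated]) auto

lemma finite_NCBs: "finite (NCBs N)"
proof -
  have "NCBs N \<subseteq> Pow ({-N..N} \<times> {-N..N})" unfolding NCBs_def sys_def by auto
  then show ?thesis by (rule finite_subset) simp
qed

lemma arcsB_neg: "arcsB (uminus ` B) = mir (arcsB B)"
proof (rule set_eqI, clarify)
  fix u v :: int
  have "(u,v) \<in> arcsB (uminus ` B) \<longleftrightarrow> -u \<in> B \<and> -v \<in> B \<and> u < v \<and> (\<forall>k\<in>B. u < -k \<longrightarrow> v \<le> -k)"
    unfolding arcsB_def by (auto simp: image_iff) (metis minus_minus)+
  also have "\<dots> \<longleftrightarrow> -u \<in> B \<and> -v \<in> B \<and> -v < -u \<and> (\<forall>k\<in>B. -v < k \<longrightarrow> -u \<le> k)"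
    by (auto; smt (verit))
  also have "\<dots> \<longleftrightarrow> (u,v) \<in> mir (arcsB B)"
    unfolding mir_mem arcsB_def by auto
  finally show "(u,v) \<in> arcsB (uminus ` B) \<longleftrightarrow> (u,v) \<in> mir (arcsB B)" .
qed

lemma Arc_neg: "Arc ((`) uminus ` P) = mir (Arc P)"
  unfolding Arc_UN by (simp add: arcsB_neg mir_def image_UN)

lemma part_neg:
  fixes S :: "int set"
  assumes P: "partition_on S P" and S: "uminus ` S = S"
  shows "partition_on S ((`) uminus ` P)"
proof -
  have "partition_on (uminus ` S) ((`) uminus ` P - {{}})"
    by (rule partition_on_inj_image[OF P]) (simp add: inj_on_def)
  moreover have "(`) uminus ` P - {{}} = (`) uminus ` P" using partition_onD3[OF P] by auto
  ultimately show ?thesis using S by simp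
qed

lemma blockcond:
  assumes fin: "finite S" and P: "partition_on S P" and S: "uminus ` S = S"
    and sym: "\<forall>i j. (i,j) \<in> Arc P \<longleftrightarrow> (-j,-i) \<in> Arc P"
  shows "(\<forall>B\<in>P. uminus ` B = B \<longrightarrow> 0 \<in> B) \<longleftrightarrow> (\<forall>v. (-v,v) \<notin> Arc P)"
proof
  assume bc: "\<forall>B\<in>P. uminus ` B = B \<longrightarrow> 0 \<in> B"
  show "\<forall>v. (-v,v) \<notin> Arc P"
  proof (intro allI notI)
    fix v assume a: "(-v,v) \<in> Arc P"
    obtain B where B: "B \<in> P" "-v \<in> B" "v \<in> B" "-v < v" "\<forall>k\<in>B. -v < k \<longrightarrow> v \<le> k"
      by (rule Arc_block[OF P a])
    have "Arc ((`) uminus ` P) = Arc P"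
      unfolding Arc_neg using sym by (auto simp: mir_mem)
    then have "(`) uminus ` P = P" using Arc_inj[OF fin part_neg[OF P S] P] by simp
    then have "uminus ` B \<in> P" using B(1) by blast
    moreover have "v \<in> uminus ` B" using B(2) by force
    ultimately have "uminus ` B = B" using part_same[OF P _ B(1) _ B(3)] by blast
    then have "0 \<in> B" using bc B(1) by blast
    then show False using B(4,5) by force
  qed
next
  assume nv: "\<forall>v. (-v,v) \<notin> Arc P"
  show "\<forall>B\<in>P. uminus ` B = B \<longrightarrow> 0 \<in> B"
  proof (intro ballI impI)
    fix B assume BP: "B \<in> P" and BB: "uminus ` B = B"
    show "0 \<in> B"
    proof (rule ccontr)
      assume n0: "0 \<notin> B"
      have finB: "finite B" using fin BP partition_onD1[OF P] by (metis Union_upper finite_subset)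
      obtain b where b: "b \<in> B" using partition_onD3[OF P] BP by (metis equals0I)
      have mb: "-b \<in> B" using BB b by force
      have bn: "b \<noteq> 0" using b n0 by auto
      define Ng where "Ng = {c\<in>B. c < 0}"
      define Ps where "Ps = {c\<in>B. 0 < c}"
      have neN: "Ng \<noteq> {}" using b mb bn unfolding Ng_def by (cases "b < 0") auto
      have neP: "Ps \<noteq> {}" using b mb bn unfolding Ps_def by (cases "b < 0") auto
      have fN: "finite Ng" "finite Ps" using finB unfolding Ng_def Ps_def by auto
      define u where "u = Max Ng"
      define w where "w = Min Ps"
      have u: "u \<in> B" "u < 0" "\<forall>c\<in>B. c < 0 \<longrightarrow> c \<le> u"
        using Max_in[OF fN(1) neN] Max_ge[OF fN(1)] unfolding u_def Ng_def by auto
      have w: "w \<in> B" "0 < w" "\<forall>c\<in>B. 0 < c \<longrightarrow> w \<le> c"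
        using Min_in[OF fN(2) neP] Min_le[OF fN(2)] unfolding w_def Ps_def by auto
      have "(u,w) \<in> arcsB B"
        unfolding arcsB_def using u w n0 by (auto, metis linorder_neqE_linordered_idom not_le)
      then have uw: "(u,w) \<in> Arc P" using BP unfolding Arc_UN by blast
      then have "(-w,-u) \<in> Arc P" using sym by blast
      then obtain B' where B': "B' \<in> P" "-w \<in> B'" "-u \<in> B'" "-w < -u" "\<forall>k\<in>B'. -w < k \<longrightarrow> -u \<le> k"
        by (rule Arc_block[OF P])
      have mw: "-w \<in> B" using BB w(1) by force
      have "B' = B" using part_same[OF P B'(1) BP B'(2) mw] .
      have "-w \<le> u" using u(3) mw w(2) by simp
      moreover have "\<not> -w < u"
      proof
        assume "-w < u"
        then have "-u \<le> u" using B'(5) \<open>B' = B\<close> u(1) by blast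
        then show False using u(2) by simp
      qed
      ultimately have "u = -w" by simp
      then show False using uw nv by (metis minus_minus)
    qed
  qed
qed

lemma half_card:
  assumes A: "A \<in> NCBs N" and Q: "\<And>i j. Q (-j,-i) = Q (i,j)"
  shows "card {a\<in>A. Q a} = 2 * card {a\<in>A. Q a \<and> fst a + snd a > 0}"
proof -
  define H where "H = {a\<in>A. Q a \<and> fst a + snd a > 0}"
  define G where "G = {a\<in>A. Q a \<and> \<not> fst a + snd a > 0}"
  have fA: "finite A" by (rule finite_NCBs_mem[OF A])
  have GH: "G = mir H"
  proof (rule set_eqI, clarify)
    fix u v
    show "(u,v) \<in> G \<longleftrightarrow> (u,v) \<in> mir H"
    proof
      assume "(u,v) \<in> G"
      then have uv: "(u,v) \<in> A" "Q (u,v)" "u + v \<le> 0" unfolding G_def by auto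
      have "u \<noteq> -v" using NCBs_D(5)[OF A, of v] uv(1) by auto
      then have "u + v < 0" using uv(3) by simp
      moreover have "(-v,-u) \<in> A" using NCBs_D(4)[OF A uv(1)] .
      moreover have "Q (-v,-u)" using Q uv(2) by simp
      ultimately show "(u,v) \<in> mir H" unfolding mir_mem H_def by simp
    next
      assume "(u,v) \<in> mir H"
      then have uv: "(-v,-u) \<in> A" "Q (-v,-u)" "-v + -u > 0" unfolding mir_mem H_def by auto
      have "(u,v) \<in> A" using NCBs_D(4)[OF A uv(1)] by simp
      then show "(u,v) \<in> G" using uv Q unfolding G_def by auto
    qed
  qed
  have inj: "inj_on (\<lambda>(i,j). (-j,-i::int)) H" by (auto intro: inj_onI)
  have cG: "card G = card H" unfolding GH mir_def using card_image[OF inj] .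
  have "{a\<in>A. Q a} = H \<union> G" unfolding H_def G_def by auto
  moreover have "H \<inter> G = {}" unfolding H_def G_def by auto
  moreover have "finite H" "finite G" using fA unfolding H_def G_def by auto
  ultimately have "card {a\<in>A. Q a} = card H + card G" by (simp add: card_Un_disjoint)
  then show ?thesis using cG unfolding H_def by simp
qed

lemma weightB:
  assumes A: "A \<in> NCBs N"
  shows "x ^ (card {a\<in>A. snd a \<noteq> fst a + 1} div 2) * y ^ (card {a\<in>A. snd a = fst a + 1} div 2) = wB x y A"
proof -
  have c1: "card {a\<in>A. snd a \<noteq> fst a + 1} div 2 = card {a\<in>{a\<in>A. fst a + snd a > 0}. snd a \<noteq> fst a + 1}"
  proof -
    have q: "(snd (-j,-i) \<noteq> fst (-j,-i) + 1) = (snd (i,j) \<noteq> fst (i,j) + 1)" for i j :: int by auto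
    have e: "{a\<in>{a\<in>A. fst a + snd a > 0}. snd a \<noteq> fst a + 1} = {a\<in>A. snd a \<noteq> fst a + 1 \<and> fst a + snd a > 0}" by auto
    show ?thesis unfolding e using half_card[where Q="\<lambda>a. snd a \<noteq> fst a + 1", OF A q] by simp
  qed
  have c2: "card {a\<in>A. snd a = fst a + 1} div 2 = card {a\<in>{a\<in>A. fst a + snd a > 0}. snd a = fst a + 1}"
  proof -
    have q: "(snd (-j,-i) = fst (-j,-i) + 1) = (snd (i,j) = fst (i,j) + 1)" for i j :: int by auto
    have e: "{a\<in>{a\<in>A. fst a + snd a > 0}. snd a = fst a + 1} = {a\<in>A. snd a = fst a + 1 \<and> fst a + snd a > 0}" by auto
    show ?thesis unfolding e using half_card[where Q="\<lambda>a. snd a = fst a + 1", OF A q] by simp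
  qed
  have "finite {a\<in>A. fst a + snd a > 0}" using finite_NCBs_mem[OF A] by simp
  then show ?thesis unfolding c1 c2 wB_def using weight_eq unfolding wA_def by blast
qed

lemma CatB_TB: "CatB n x y = TB n x y"
proof -
  define S where "S = {- int n..int n}"
  have finS: "finite S" unfolding S_def by simp
  have negS: "uminus ` S = S"
  proof
    show "uminus ` S \<subseteq> S" unfolding S_def by auto
    show "S \<subseteq> uminus ` S" unfolding S_def by (auto simp: image_iff)
  qed
  define \<Phi> :: "(int \<times> int) set \<Rightarrow> bool" where "\<Phi> A \<longleftrightarrow> (\<forall>i j. (i,j) \<in> A \<longleftrightarrow> (-j,-i) \<in> A) \<and> (\<forall>v. (-v,v) \<notin> A)
     \<and> (\<forall>i j k l. (i,k) \<in> A \<longrightarrow> (j,l) \<in> A \<longrightarrow> i < j \<longrightarrow> j < k \<longrightarrow> k < l \<longrightarrow> (i,k) = (-l,-j))" for A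
  have eq1: "NCB_tilde n = {P. partition_on S P \<and> \<Phi> (Arc P)}"
  proof -
    have "P \<in> NCB_tilde n \<longleftrightarrow> partition_on S P \<and> \<Phi> (Arc P)" for P
    proof
      assume "P \<in> NCB_tilde n"
      then have P: "partition_on S P" and sym: "\<forall>i j. (i, j) \<in> Arc P \<longleftrightarrow> (- j, - i) \<in> Arc P"
        and bc: "\<forall>B\<in>P. uminus ` B = B \<longrightarrow> 0 \<in> B"
        and cr: "\<forall>i j k l. (i, k) \<in> Arc P \<and> (j, l) \<in> Arc P \<and> i < j \<and> j < k \<and> k < l \<longrightarrow> (i, k) = (- l, - j)"
        unfolding NCB_tilde_def PiB_def S_def by auto
      have "\<forall>v. (-v,v) \<notin> Arc P" using blockcond[OF finS P negS sym] bc by blast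
      then show "partition_on S P \<and> \<Phi> (Arc P)" using P sym cr unfolding \<Phi>_def by blast
    next
      assume a: "partition_on S P \<and> \<Phi> (Arc P)"
      then have P: "partition_on S P" and sym: "\<forall>i j. (i, j) \<in> Arc P \<longleftrightarrow> (- j, - i) \<in> Arc P"
        and nv: "\<forall>v. (-v,v) \<notin> Arc P" unfolding \<Phi>_def by auto
      have "\<forall>B\<in>P. uminus ` B = B \<longrightarrow> 0 \<in> B" using blockcond[OF finS P negS sym] nv by blast
      then show "P \<in> NCB_tilde n" using a unfolding NCB_tilde_def PiB_def S_def \<Phi>_def by blast
    qed
    then show ?thesis by blast
  qed
  have eq2: "NCBs (int n) = {A. sys S A \<and> \<Phi> A}"
    unfolding NCBs_def S_def \<Phi>_def by blast
  have bij: "bij_betw Arc (NCB_tilde n) (NCBs (int n))"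
    unfolding eq1 eq2 by (rule Arc_bij[OF finS])
  have AC: "Arc P - Cov P = {a\<in>Arc P. snd a \<noteq> fst a + 1}" for P unfolding Cov_def by auto
  have Cv: "Cov P = {a\<in>Arc P. snd a = fst a + 1}" for P unfolding Cov_def by auto
  have "CatB n x y = (\<Sum>P\<in>NCB_tilde n. wB x y (Arc P))"
    unfolding CatB_def
  proof (rule sum.cong[OF refl])
    fix P assume "P \<in> NCB_tilde n"
    then have "Arc P \<in> NCBs (int n)" using bij unfolding bij_betw_def by blast
    then show "x ^ (card (Arc P - Cov P) div 2) * y ^ (card (Cov P) div 2) = wB x y (Arc P)"
      unfolding AC unfolding Cv by (rule weightB)
  qed
  also have "\<dots> = TB n x y"
    unfolding TB_def by (rule sum.reindex_bij_betw[OF bij])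
  finally show ?thesis .
qed

lemma NCBs_restr: "A \<in> NCBs N \<Longrightarrow> A \<inter> ({-L..L}\<times>{-L..L}) \<in> NCBs L"
  unfolding NCBs_iff by auto

lemma NCBs_restr_pos:
  assumes A: "A \<in> NCBs N" and a: "0 < a"
  shows "A \<inter> ({a..b}\<times>{a..b}) \<in> NCAs a b"
proof -
  note D = NCBs_D[OF A]
  have cr: "False" if "(i,k) \<in> A \<inter> ({a..b}\<times>{a..b})" "(j,l) \<in> A \<inter> ({a..b}\<times>{a..b})" "i < j" "j < k" "k < l"
    for i j k l
  proof -
    have "(i,k) = (-l,-j)" using D(6)[of i k j l] that by auto
    then show False using that a by auto
  qed
  show ?thesis unfolding NCAs_iff
    apply (intro conjI allI impI)
    apply (auto dest: D(1))[5]
    apply (auto dest: D(2) D(3))[2]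
    using cr by blast
qed

lemma validB:
  assumes L: "0 \<le> L" "L < N" and s: "s = L \<or> (s = -L-1 \<and> L+1 < N)"
    and RI: "R \<in> NCBs L" "I \<in> NCAs (L+1) (N-1)"
  shows "R \<union> I \<union> mir I \<union> {(s,N), (-N,-s)} \<in> NCBs N"
proof -
  note R = NCBs_D[OF RI(1)]
  note I = NCAs_D[OF RI(2)]
  have R5: "False" if "(-v,v) \<in> R" for v using R(5) that by blast
  have Mr: "-(N-1) \<le> i \<and> i \<le> -(L+1) \<and> -(N-1) \<le> j \<and> j \<le> -(L+1) \<and> i < j" if "(i,j) \<in> mir I" for i j
    using I(1)[of "-j" "-i"] that unfolding mir_mem by auto
  have M2: "j = j'" if "(i,j) \<in> mir I" "(i,j') \<in> mir I" for i j j'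
    using I(3)[of "-j" "-i" "-j'"] that unfolding mir_mem by auto
  have M3: "i = i'" if "(i,j) \<in> mir I" "(i',j) \<in> mir I" for i i' j
    using I(2)[of "-j" "-i" "-i'"] that unfolding mir_mem by auto
  have M4: "False" if "(i,k) \<in> mir I" "(j,l) \<in> mir I" "i < j" "j < k" "k < l" for i j k l
    using I(4)[of "-l" "-j" "-k" "-i"] that unfolding mir_mem by auto
  have sN: "-N < s" "s < N" "-N < -s" "-s < N" "s + N > 0" using L s by auto
  let ?G = "R \<union> I \<union> mir I \<union> {(s,N), (-N,-s)}"
  have P1: "\<forall>i j. (i,j) \<in> ?G \<longrightarrow> -N \<le> i \<and> i \<le> N \<and> -N \<le> j \<and> j \<le> N \<and> i < j"
    apply (intro allI impI; elim insertE UnE)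
    using L sN by (auto dest!: R(1) I(1) Mr)
  have P2: "\<forall>i j j'. (i,j) \<in> ?G \<longrightarrow> (i,j') \<in> ?G \<longrightarrow> j = j'"
    apply (intro allI impI; elim insertE UnE)
    using L s sN apply (auto dest: R(2) I(2) M2)
    apply (auto dest!: R(1) I(1) Mr)
    done
  have P3: "\<forall>i i' j. (i,j) \<in> ?G \<longrightarrow> (i',j) \<in> ?G \<longrightarrow> i = i'"
    apply (intro allI impI; elim insertE UnE)
    using L s sN apply (auto dest: R(3) I(3) M3)
    apply (auto dest!: R(1) I(1) Mr)
    done
  have P4: "\<forall>i j. (i,j) \<in> ?G \<longrightarrow> (-j,-i) \<in> ?G"
    apply (intro allI impI; elim insertE UnE)
    by (auto simp: mir_mem dest: R(4))
  have P5: "\<forall>v. (-v,v) \<notin> ?G"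
    apply (intro allI notI; elim insertE UnE)
    using L sN by (auto simp: mir_mem dest: R5 dest!: I(1))
  have P6: "\<forall>i j k l. (i,k) \<in> ?G \<longrightarrow> (j,l) \<in> ?G \<longrightarrow> i < j \<longrightarrow> j < k \<longrightarrow> k < l \<longrightarrow> (i,k) = (-l,-j)"
    apply (intro allI impI; elim insertE UnE)
    using L s sN apply (auto dest: R(6) I(4) M4)
    apply (auto dest!: R(1) I(1) Mr)
    done
  show ?thesis unfolding NCBs_iff using P1 P2 P3 P4 P5 P6 by blast
qed

lemma partB:
  assumes L: "0 \<le> L" "L < N" and s: "s = L \<or> (s = -L-1 \<and> L+1 < N)"
  shows "(\<Sum>A\<in>{A\<in>NCBs N. (s,N) \<in> A}. wB x y A)
     = fA x y (s,N) * (\<Sum>R\<in>NCBs L. wB x y R) * (\<Sum>I\<in>NCAs (L+1) (N-1). wA x y I)"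
proof -
  define g where "g = (\<lambda>(R,I). R \<union> I \<union> mir I \<union> {(s,N), (-N,-s)})"
  define h where "h A = (A \<inter> ({-L..L}\<times>{-L..L}), A \<inter> ({L+1..N-1}\<times>{L+1..N-1}))" for A
  define Y where "Y = NCBs L \<times> NCAs (L+1) (N-1)"
  define Z where "Z = {A\<in>NCBs N. (s,N) \<in> A}"
  have sN: "-N < s" "s < N" "-N < -s" "-s < N" "s + N > 0" using L s by auto
  have F1: "h (g RI) = RI" if RIY: "RI \<in> Y" for RI
  proof -
    obtain R I where RI: "RI = (R,I)" "R \<in> NCBs L" "I \<in> NCAs (L+1) (N-1)"
      using RIY unfolding Y_def by (cases RI) auto
    note R = NCBs_D(1)[OF RI(2)]
    note I = NCAs_D(1)[OF RI(3)]
    have b1: "R \<subseteq> {-L..L}\<times>{-L..L}" by (auto dest!: R)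
    have b2: "I \<subseteq> {L+1..N-1}\<times>{L+1..N-1}" by (auto dest!: I)
    have b3: "I \<inter> {-L..L}\<times>{-L..L} = {}" by (auto dest!: I)
    have b4: "R \<inter> {L+1..N-1}\<times>{L+1..N-1} = {}" by (auto dest!: R)
    have b5: "mir I \<inter> {-L..L}\<times>{-L..L} = {}" using L by (auto simp: mir_mem dest!: I)
    have b6: "mir I \<inter> {L+1..N-1}\<times>{L+1..N-1} = {}" using L by (auto simp: mir_mem dest!: I)
    have "g (R,I) \<inter> ({-L..L}\<times>{-L..L}) = R"
      unfolding g_def using b1 b3 b5 L sN by auto
    moreover have "g (R,I) \<inter> ({L+1..N-1}\<times>{L+1..N-1}) = I"
      unfolding g_def using b2 b4 b6 L sN by auto
    ultimately show ?thesis unfolding RI(1) h_def by simp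
  qed
  have F2: "g (h A) = A" if AZ: "A \<in> Z" for A
  proof -
    have AN: "A \<in> NCBs N" and sA: "(s,N) \<in> A" using AZ unfolding Z_def by auto
    note D = NCBs_D[OF AN]
    have sA': "(-N,-s) \<in> A" using D(4)[OF sA] .
    have cl: "(i,j) = (s,N) \<or> (i,j) = (-N,-s) \<or> (i \<in> {-L..L} \<and> j \<in> {-L..L})
         \<or> (i \<in> {L+1..N-1} \<and> j \<in> {L+1..N-1}) \<or> (-j \<in> {L+1..N-1} \<and> -i \<in> {L+1..N-1})"
      if ij: "(i,j) \<in> A" for i j
    proof -
      consider "j = N" | "i = -N" | "i = s" | "j = -s" | "j \<noteq> N" "i \<noteq> -N" "i \<noteq> s" "j \<noteq> -s" by blast
      then show ?thesis
      proof cases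
        case 1 then show ?thesis using D(3)[of i j s] ij sA by simp
      next
        case 2 then show ?thesis using D(2)[of i j "-s"] ij sA' by simp
      next
        case 3 then show ?thesis using D(2)[of i j N] ij sA by simp
      next
        case 4 then show ?thesis using D(3)[of i j "-N"] ij sA' by simp
      next
        case 5
        have r: "-N \<le> i" "j \<le> N" "i < j" using D(1)[OF ij] by auto
        have c1: "\<not> (i < s \<and> s < j)"
        proof
          assume "i < s \<and> s < j"
          then have "(i,j) = (-N,-s)" using D(6)[OF ij sA] r 5 by auto
          then show False using 5 by simp
        qed
        have c2: "\<not> (i < -s \<and> -s < j)"
        proof
          assume "i < -s \<and> -s < j"
          then have "(-N,-s) = (-j,-i)" using D(6)[OF sA' ij] r 5 by auto
          then show False using 5 by simp
        qed
        show ?thesis using s r c1 c2 5 L by auto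
      qed
    qed
    have mI: "A \<inter> ({-(N-1)..-(L+1)}\<times>{-(N-1)..-(L+1)}) = mir (A \<inter> ({L+1..N-1}\<times>{L+1..N-1}))"
    proof (rule set_eqI, clarify)
      fix u v
      show "(u,v) \<in> A \<inter> ({-(N-1)..-(L+1)}\<times>{-(N-1)..-(L+1)}) \<longleftrightarrow> (u,v) \<in> mir (A \<inter> ({L+1..N-1}\<times>{L+1..N-1}))"
        unfolding mir_mem using D(4)[of u v] D(4)[of "-v" "-u"] by auto
    qed
    have "A \<subseteq> g (h A)"
    proof
      fix a assume a: "a \<in> A"
      obtain i j where ij: "a = (i,j)" by force
      have "(i,j) \<in> A" using a ij by simp
      then have "(-j,-i) \<in> A" by (rule D(4))
      then show "a \<in> g (h A)"
        using cl[of i j] a ij unfolding g_def h_def by (auto simp: mir_mem)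
    qed
    moreover have "g (h A) \<subseteq> A"
    proof -
      have Dm: "(u,v) \<in> A" if "(-v,-u) \<in> A" for u v using D(4)[OF that] by simp
      show ?thesis unfolding g_def h_def using sA sA' by (auto simp: mir_mem intro: Dm)
    qed
    ultimately show ?thesis by blast
  qed
  have F4: "h A \<in> Y" if "A \<in> Z" for A
    using NCBs_restr[of A N L] NCBs_restr_pos[of A N "L+1" "N-1"] that L
    unfolding Z_def Y_def h_def by auto
  have F3: "g RI \<in> Z" if RIY: "RI \<in> Y" for RI
  proof -
    obtain R I where RI: "RI = (R,I)" "R \<in> NCBs L" "I \<in> NCAs (L+1) (N-1)"
      using RIY unfolding Y_def by (cases RI) auto
    have "g (R,I) \<in> NCBs N" unfolding g_def using validB[OF L s RI(2) RI(3)] by simp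
    then show ?thesis unfolding Z_def RI(1) g_def by simp
  qed
  have bij: "bij_betw g Y Z"
    by (rule bij_betw_byWitness[where f'=h]) (use F1 F2 F3 F4 in auto)
  have "(\<Sum>A\<in>Z. wB x y A) = (\<Sum>RI\<in>Y. wB x y (g RI))"
    by (rule sum.reindex_bij_betw[OF bij, symmetric])
  also have "\<dots> = (\<Sum>RI\<in>Y. fA x y (s,N) * wB x y (fst RI) * wA x y (snd RI))"
  proof (rule sum.cong[OF refl])
    fix RI assume "RI \<in> Y"
    then obtain R I where RI: "RI = (R,I)" "R \<in> NCBs L" "I \<in> NCAs (L+1) (N-1)" unfolding Y_def by auto
    note R = NCBs_D(1)[OF RI(2)]
    note I = NCAs_D(1)[OF RI(3)]
    define PR where "PR = {a\<in>R. fst a + snd a > 0}"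
    have pos: "{a\<in>g RI. fst a + snd a > 0} = insert (s,N) (PR \<union> I)"
    proof -
      have "\<not> fst a + snd a > 0" if "a \<in> mir I" for a
        using that L by (cases a) (auto simp: mir_mem dest!: I)
      moreover have "fst a + snd a > 0" if "a \<in> I" for a
        using that L by (cases a) (auto dest!: I)
      ultimately show ?thesis unfolding RI(1) g_def PR_def using sN by auto
    qed
    have d: "PR \<inter> I = {}" unfolding PR_def by (auto dest!: R I)
    have nm: "(s,N) \<notin> PR \<union> I" unfolding PR_def using L by (auto dest!: R I)
    have fin: "finite PR" "finite I" using finite_NCBs_mem[OF RI(2)] finite_NCAs_mem[OF RI(3)]
      unfolding PR_def by auto
    have "wB x y (g RI) = wA x y (insert (s,N) (PR \<union> I))"
      unfolding wB_def wA_def pos ..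
    also have "\<dots> = fA x y (s,N) * wA x y PR * wA x y I"
      by (rule wA_insert_union[OF fin d nm])
    finally show "wB x y (g RI) = fA x y (s,N) * wB x y (fst RI) * wA x y (snd RI)"
      unfolding RI(1) wB_def wA_def PR_def by simp
  qed
  also have "\<dots> = (\<Sum>R\<in>NCBs L. \<Sum>I\<in>NCAs (L+1) (N-1). fA x y (s,N) * wB x y R * wA x y I)"
    unfolding Y_def by (simp add: sum.cartesian_product case_prod_beta)
  also have "\<dots> = fA x y (s,N) * ((\<Sum>R\<in>NCBs L. wB x y R) * (\<Sum>I\<in>NCAs (L+1) (N-1). wA x y I))"
    by (subst sum_product) (simp add: sum_distrib_left mult.assoc)
  finally show ?thesis unfolding Z_def by (simp add: mult.assoc)
qed

lemma TB_rec:
  assumes n: "n \<ge> 1"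
  shows "TB n x y = TB (n-1) x y + (\<Sum>L\<in>{..<n}. fA x y (int L, int n) * TB L x y * TA (n-1-L) x y)
           + (\<Sum>L\<in>{..<n-1}. x * TB L x y * TA (n-1-L) x y)"
proof -
  define N where "N = int n"
  define X where "X = NCBs N"
  define X0 where "X0 = {A\<in>X. \<forall>i. (i,N) \<notin> A}"
  define Z where "Z M = {A\<in>X. (M,N) \<in> A}" for M
  define K where "K = {-(N-1)..N-1}"
  have fX: "finite X" unfolding X_def by (rule finite_NCBs)
  have XU: "X = X0 \<union> (\<Union>i\<in>K. Z i)"
  proof
    show "X \<subseteq> X0 \<union> (\<Union>i\<in>K. Z i)"
    proof
      fix A assume A: "A \<in> X"
      show "A \<in> X0 \<union> (\<Union>i\<in>K. Z i)"
      proof (cases "\<exists>i. (i,N) \<in> A")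
        case True
        then obtain i where i: "(i,N) \<in> A" by blast
        have "-N \<le> i" "i < N" using NCBs_D(1)[OF A[unfolded X_def] i] by auto
        moreover have "i \<noteq> -N" using NCBs_D(5)[OF A[unfolded X_def], of N] i by auto
        ultimately have "i \<in> K" unfolding K_def by auto
        moreover have "A \<in> Z i" unfolding Z_def using i A by blast
        ultimately show ?thesis by blast
      next
        case False
        then show ?thesis using A unfolding X0_def by blast
      qed
    qed
    show "X0 \<union> (\<Union>i\<in>K. Z i) \<subseteq> X" unfolding X0_def Z_def by blast
  qed
  have "TB n x y = (\<Sum>A\<in>X. wB x y A)" unfolding TB_def X_def N_def ..
  also have "\<dots> = (\<Sum>A\<in>X0. wB x y A) + (\<Sum>A\<in>(\<Union>i\<in>K. Z i). wB x y A)"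
    unfolding XU
  proof (rule sum.union_disjoint)
    show "finite X0" using fX unfolding X0_def by simp
    show "finite (\<Union>i\<in>K. Z i)" using fX unfolding Z_def K_def by auto
    show "X0 \<inter> (\<Union>i\<in>K. Z i) = {}" unfolding X0_def Z_def by blast
  qed
  also have "(\<Sum>A\<in>(\<Union>i\<in>K. Z i). wB x y A) = (\<Sum>i\<in>K. \<Sum>A\<in>Z i. wB x y A)"
  proof (rule sum.UNION_disjoint)
    show "finite K" unfolding K_def by simp
    show "\<forall>i\<in>K. finite (Z i)" using fX unfolding Z_def by simp
    show "\<forall>i\<in>K. \<forall>j\<in>K. i \<noteq> j \<longrightarrow> Z i \<inter> Z j = {}"
      unfolding Z_def X_def using NCBs_D(3) by blast
  qed
  also have "X0 = NCBs (N-1)"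
  proof
    show "X0 \<subseteq> NCBs (N - 1)"
    proof
      fix A assume A: "A \<in> X0"
      then have AX: "A \<in> NCBs N" and no: "\<forall>i. (i,N) \<notin> A" unfolding X0_def X_def by auto
      note D = NCBs_D[OF AX]
      have r: "-(N-1) \<le> i \<and> i \<le> N - 1 \<and> -(N-1) \<le> j \<and> j \<le> N - 1 \<and> i < j" if ij: "(i,j) \<in> A" for i j
      proof -
        have "j \<noteq> N" using no ij by blast
        moreover have "i \<noteq> -N" using no D(4)[OF ij] by auto
        ultimately show ?thesis using D(1)[OF ij] by auto
      qed
      show "A \<in> NCBs (N-1)"
        unfolding NCBs_iff
        apply (intro conjI)
        apply (use r in blast)
        apply (use D(2) in blast)
        apply (use D(3) in blast)
        apply (use D(4) in blast)
        apply (use D(5) in blast)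
        apply (use D(6) in blast)
        done
    qed
    show "NCBs (N - 1) \<subseteq> X0"
    proof
      fix A assume A: "A \<in> NCBs (N - 1)"
      note D = NCBs_D[OF A]
      have r: "-N \<le> i \<and> i \<le> N \<and> -N \<le> j \<and> j \<le> N \<and> i < j" if ij: "(i,j) \<in> A" for i j
        using D(1)[OF ij] by auto
      have "A \<in> NCBs N"
        unfolding NCBs_iff
        apply (intro conjI)
        apply (use r in blast)
        apply (use D(2) in blast)
        apply (use D(3) in blast)
        apply (use D(4) in blast)
        apply (use D(5) in blast)
        apply (use D(6) in blast)
        done
      moreover have "\<forall>i. (i,N) \<notin> A"
      proof (intro allI notI)
        fix i assume "(i,N) \<in> A"
        then show False using D(1)[of i N] by simp
      qed
      ultimately show "A \<in> X0" unfolding X0_def X_def by blast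
    qed
  qed
  also have "(\<Sum>A\<in>NCBs (N-1). wB x y A) = TB (n-1) x y"
    unfolding TB_def N_def using n by (simp add: of_nat_diff)
  also have "(\<Sum>i\<in>K. \<Sum>A\<in>Z i. wB x y A)
      = (\<Sum>i\<in>{0..N-1}. \<Sum>A\<in>Z i. wB x y A) + (\<Sum>i\<in>{-(N-1)..-1}. \<Sum>A\<in>Z i. wB x y A)"
  proof -
    have "K = {0..N-1} \<union> {-(N-1)..-1}" unfolding K_def by auto
    then show ?thesis by (simp add: sum.union_disjoint ivl_disj_int)
  qed
  also have "(\<Sum>i\<in>{0..N-1}. \<Sum>A\<in>Z i. wB x y A) = (\<Sum>L\<in>{..<n}. fA x y (int L, int n) * TB L x y * TA (n-1-L) x y)"
  proof -
    have e: "{0..N-1} = int ` {..<n}" unfolding N_def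
    proof
      show "{0..int n - 1} \<subseteq> int ` {..<n}"
      proof
        fix i assume i: "i \<in> {0..int n - 1}"
        then have "nat i \<in> {..<n}" "i = int (nat i)" by auto
        then show "i \<in> int ` {..<n}" by blast
      qed
    qed auto
    have "(\<Sum>i\<in>{0..N-1}. \<Sum>A\<in>Z i. wB x y A) = (\<Sum>L\<in>{..<n}. \<Sum>A\<in>Z (int L). wB x y A)"
      unfolding e using sum.reindex[of int "{..<n}" "\<lambda>i. \<Sum>A\<in>Z i. wB x y A"] by (simp add: o_def)
    also have "\<dots> = (\<Sum>L\<in>{..<n}. fA x y (int L, int n) * TB L x y * TA (n-1-L) x y)"
    proof (rule sum.cong[OF refl])
      fix L assume L: "L \<in> {..<n}"
      have "(\<Sum>A\<in>Z (int L). wB x y A)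
          = fA x y (int L, N) * (\<Sum>R\<in>NCBs (int L). wB x y R) * (\<Sum>I\<in>NCAs (int L+1) (N-1). wA x y I)"
        unfolding Z_def X_def by (rule partB) (use L in \<open>simp_all add: N_def\<close>)
      also have "(\<Sum>I\<in>NCAs (int L+1) (N-1). wA x y I) = TA (n-1-L) x y"
      proof -
        have "int L + 1 \<le> N - 1 + 1" using L unfolding N_def by auto
        then show ?thesis using NCAs_TA[of "int L + 1" "N-1" x y] L unfolding N_def by (simp add: nat_diff_distrib)
      qed
      finally show "(\<Sum>A\<in>Z (int L). wB x y A) = fA x y (int L, int n) * TB L x y * TA (n-1-L) x y"
        unfolding N_def TB_def by simp
    qed
    finally show ?thesis .
  qed
  also have "(\<Sum>i\<in>{-(N-1)..-1}. \<Sum>A\<in>Z i. wB x y A) = (\<Sum>L\<in>{..<n-1}. x * TB L x y * TA (n-1-L) x y)"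
  proof -
    have inj: "inj_on (\<lambda>L. - int L - 1) {..<n-1}" by (auto intro: inj_onI)
    have "{-(N-1)..-1} = (\<lambda>L. - int L - 1) ` {..<n-1}" unfolding N_def
    proof
      show "{- (int n - 1)..- 1} \<subseteq> (\<lambda>L. - int L - 1) ` {..<n - 1}"
      proof
        fix i assume i: "i \<in> {- (int n - 1)..- 1}"
        then have "nat (-i-1) \<in> {..<n-1}" "i = - int (nat (-i-1)) - 1" by auto
        then show "i \<in> (\<lambda>L. - int L - 1) ` {..<n - 1}" by blast
      qed
      show "(\<lambda>L. - int L - 1) ` {..<n - 1} \<subseteq> {- (int n - 1)..- 1}" by auto
    qed
    then have "(\<Sum>i\<in>{-(N-1)..-1}. \<Sum>A\<in>Z i. wB x y A) = (\<Sum>L\<in>{..<n-1}. \<Sum>A\<in>Z (- int L - 1). wB x y A)"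
      using sum.reindex[OF inj, of "\<lambda>i. \<Sum>A\<in>Z i. wB x y A"] by (simp add: o_def)
    also have "\<dots> = (\<Sum>L\<in>{..<n-1}. x * TB L x y * TA (n-1-L) x y)"
    proof (rule sum.cong[OF refl])
      fix L assume L: "L \<in> {..<n-1}"
      have "(\<Sum>A\<in>Z (- int L - 1). wB x y A)
          = fA x y (- int L - 1, N) * (\<Sum>R\<in>NCBs (int L). wB x y R) * (\<Sum>I\<in>NCAs (int L+1) (N-1). wA x y I)"
        unfolding Z_def X_def by (rule partB) (use L in \<open>simp_all add: N_def\<close>)
      also have "fA x y (- int L - 1, N) = x" unfolding fA_def N_def using n by auto
      also have "(\<Sum>I\<in>NCAs (int L+1) (N-1). wA x y I) = TA (n-1-L) x y"
      proof -
        have "int L + 1 \<le> N - 1 + 1" using L unfolding N_def by auto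
        then show ?thesis using NCAs_TA[of "int L + 1" "N-1" x y] L unfolding N_def by (simp add: nat_diff_distrib)
      qed
      finally show "(\<Sum>A\<in>Z (- int L - 1). wB x y A) = x * TB L x y * TA (n-1-L) x y"
        unfolding TB_def by simp
    qed
    finally show ?thesis .
  qed
  finally show ?thesis by (simp add: add.assoc)
qed

lemma TB_rec2:
  assumes n: "n \<ge> 1"
  shows "TB n x y = (1+y) * TB (n-1) x y + 2 * x * (\<Sum>i<n-1. TB i x y * TA (n-1-i) x y)"
proof -
  have split: "{..<n} = insert (n-1) {..<n-1}" using n by auto
  have "(\<Sum>L\<in>{..<n}. fA x y (int L, int n) * TB L x y * TA (n-1-L) x y)
      = fA x y (int (n-1), int n) * TB (n-1) x y * TA (n-1-(n-1)) x y
        + (\<Sum>L\<in>{..<n-1}. fA x y (int L, int n) * TB L x y * TA (n-1-L) x y)"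
    unfolding split by (subst sum.insert) auto
  also have "fA x y (int (n-1), int n) = y" using n by (simp add: fA_def)
  also have "(\<Sum>L\<in>{..<n-1}. fA x y (int L, int n) * TB L x y * TA (n-1-L) x y)
      = (\<Sum>L\<in>{..<n-1}. x * TB L x y * TA (n-1-L) x y)"
    by (rule sum.cong[OF refl]) (auto simp: fA_def)
  finally have e: "(\<Sum>L\<in>{..<n}. fA x y (int L, int n) * TB L x y * TA (n-1-L) x y)
      = y * TB (n-1) x y + (\<Sum>L\<in>{..<n-1}. x * TB L x y * TA (n-1-L) x y)"
    by (simp add: TA0)
  have "(\<Sum>L\<in>{..<n-1}. x * TB L x y * TA (n-1-L) x y) = x * (\<Sum>i<n-1. TB i x y * TA (n-1-i) x y)"
    by (simp add: sum_distrib_left mult.assoc)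
  then show ?thesis using TB_rec[OF n, of x y] e by (simp add: algebra_simps)
qed

lemma TB0: "TB 0 x y = 1"
proof -
  have "NCBs 0 = {{}}"
  proof -
    have "A = {}" if "A \<in> NCBs 0" for A
    proof -
      have "(i,j) \<notin> A" for i j using NCBs_D(1)[OF that, of i j] by auto
      then show ?thesis by auto
    qed
    moreover have "{} \<in> NCBs 0" unfolding NCBs_iff by simp
    ultimately show ?thesis by blast
  qed
  then show ?thesis unfolding TB_def wB_def by simp
qed

theorem corollary6p10:
  fixes x y :: "'a::comm_ring_1" and n :: nat
  assumes "n \<ge> 2"
  shows "(of_nat (n + 1) * Cat n x y
           = (y + 1) * of_nat (2 * n - 1) * Cat (n - 1) x y
             + (4 * x - (y + 1)^2) * of_nat (n - 2) * Cat (n - 2) x y)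
         \<and> (of_nat n * CatB n x y
           = (y + 1) * of_nat (2 * n - 1) * CatB (n - 1) x y
             + (4 * x - (y + 1)^2) * of_nat (n - 1) * CatB (n - 2) x y)"
proof
  have c1: "Cat 1 x y = 1" using TA1[of x y] by (simp add: Cat_TA)
  have rec: "\<And>n. n \<ge> 2 \<Longrightarrow> Cat n x y = (1+y) * Cat (n-1) x y + x * (\<Sum>i=1..n-2. Cat i x y * Cat (n-1-i) x y)"
    by (simp add: Cat_TA TA_rec2)
  show "of_nat (n + 1) * Cat n x y
           = (y + 1) * of_nat (2 * n - 1) * Cat (n - 1) x y
             + (4 * x - (y + 1)^2) * of_nat (n - 2) * Cat (n - 2) x y"
    by (rule algA[where c="\<lambda>k. Cat k x y", OF c1 rec assms])
  have cb0: "CatB 0 x y = 1" by (simp add: CatB_TB TB0)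
  have recB: "\<And>n. n \<ge> 1 \<Longrightarrow> CatB n x y = (1+y) * CatB (n-1) x y + 2 * x * (\<Sum>i<n-1. CatB i x y * Cat (n-1-i) x y)"
    by (simp add: CatB_TB Cat_TA TB_rec2)
  show "of_nat n * CatB n x y
           = (y + 1) * of_nat (2 * n - 1) * CatB (n - 1) x y
             + (4 * x - (y + 1)^2) * of_nat (n - 1) * CatB (n - 2) x y"
    by (rule algB[where c="\<lambda>k. Cat k x y" and cb="\<lambda>k. CatB k x y", OF c1 rec cb0 recB assms])
qed

end
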